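(* Let $0<\mu<\nu<1/2$, $\tau\in(0,1)$, $\Psi(\xi,\eta)=-\frac34\eta(\eta-2\xi)^2$, and $D(\tau)=\{(\zeta,\eta)\in\mathbb R^2:|\zeta|+|\eta|\ge\tau^{-1/3}/10\}$. For $M\ge1$, $$\sup_{\xi,\alpha\in\mathbb R}\int_{\{\eta:(\xi,\eta)\in D(\tau)\}}\max(|\xi|,|\eta|)\frac{\langle\xi\rangle^\mu}{|\eta|^{1/2}\langle\xi-\eta\rangle^\nu}\mathbb 1_{|\Psi(\xi,\eta)-\alpha|<M}\,d\eta\lesssim\sqrt M\,\tau^{\frac{\nu-\mu}{3}},$$ with implicit constant independent of $\tau$ and $M$.
   Context: $\langle\xi\rangle=(1+\xi^2)^{1/2}$. *)

theory Defs
  imports "HOL-Analysis.Analysis"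
begin

definition jb :: "real \<Rightarrow> real" where
  "jb x = sqrt (1 + x\<^sup>2)"

definition Psi :: "real \<Rightarrow> real \<Rightarrow> real" where
  "Psi \<xi> \<eta> = - (3/4) * \<eta> * (\<eta> - 2 * \<xi>)\<^sup>2"

definition Dreg :: "real \<Rightarrow> (real \<times> real) set" where
  "Dreg \<tau> = {(\<zeta>, \<eta>). \<bar>\<zeta>\<bar> + \<bar>\<eta>\<bar> \<ge> \<tau> powr (-1/3) / 10}"

end

theory Submission
  imports Defs
begin

lemma int_pow0:
  assumes "0 \<le> a" "a < 1" "0 \<le> r"
  shows "(\<integral>\<^sup>+x. ennreal (x powr (-a)) * indicator {0..r} x \<partial>lborel) = ennreal (r powr (1-a) / (1-a))"
proof -
  have "((\<lambda>x. x powr (-a)) has_integral (r powr (-a+1) / (-a+1))) {0..r}"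
    by (rule has_integral_powr_from_0) (use assms in auto)
  then have "integral\<^sup>N lborel (\<lambda>x. indicator {0..r} x * (x powr (-a))) = r powr (-a+1) / (-a+1)"
    by (intro nn_integral_has_integral_lebesgue) auto
  moreover have "integral\<^sup>N lborel (\<lambda>x. indicator {0..r} x * (x powr (-a))) = (\<integral>\<^sup>+x. ennreal (x powr (-a)) * indicator {0..r} x \<partial>lborel)"
    by (intro nn_integral_cong) (auto simp: indicator_def)
  ultimately show ?thesis by simp
qed

lemma int_sing:
  assumes "0 \<le> a" "a < 1" "0 \<le> r"
  shows "(\<integral>\<^sup>+x. ennreal (\<bar>x - p\<bar> powr (-a)) * indicator (cball p r) x \<partial>lborel) \<le> ennreal (2 * (r powr (1-a) / (1-a)))"
proof -
  have "(\<integral>\<^sup>+x. ennreal (\<bar>x - p\<bar> powr (-a)) * indicator (cball p r) x \<partial>lborel)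
     = (\<integral>\<^sup>+x. ennreal (\<bar>(p + 1 * x) - p\<bar> powr (-a)) * indicator (cball p r) (p + 1 * x) \<partial>lborel)"
    using nn_integral_real_affine[of "\<lambda>x. ennreal (\<bar>x - p\<bar> powr (-a)) * indicator (cball p r) x" 1 p]
  proof -
    have m: "(\<lambda>x. ennreal (\<bar>x - p\<bar> powr (-a)) * indicator (cball p r) x) \<in> borel_measurable borel"
      by (simp add: cball_eq_atLeastAtMost)
    show ?thesis using nn_integral_real_affine[OF m, of 1 p] by simp
  qed
  also have "\<dots> \<le> (\<integral>\<^sup>+x. ennreal (x powr (-a)) * indicator {0..r} x + ennreal ((-x) powr (-a)) * indicator {0..r} (-x) \<partial>lborel)"
    by (intro nn_integral_mono) (auto simp: indicator_def dist_real_def abs_if)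
  also have "\<dots> = (\<integral>\<^sup>+x. ennreal (x powr (-a)) * indicator {0..r} x \<partial>lborel) + (\<integral>\<^sup>+x. ennreal ((-x) powr (-a)) * indicator {0..r} (-x) \<partial>lborel)"
    by (intro nn_integral_add) auto
  also have "(\<integral>\<^sup>+x. ennreal ((-x) powr (-a)) * indicator {0..r} (-x) \<partial>lborel) = (\<integral>\<^sup>+x. ennreal (x powr (-a)) * indicator {0..r} x \<partial>lborel)"
    using nn_integral_real_affine[of "\<lambda>x. ennreal (x powr (-a)) * indicator {0..r} x" "-1" 0]
    by simp
  also have "(\<integral>\<^sup>+x. ennreal (x powr (-a)) * indicator {0..r} x \<partial>lborel) = ennreal (r powr (1-a) / (1-a))"
    by (rule int_pow0) (use assms in auto)
  finally show ?thesis using assms by (simp add: ennreal_plus[symmetric] del: ennreal_plus)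
qed

definition pbound :: "(real \<Rightarrow> ennreal) \<Rightarrow> real set \<Rightarrow> ennreal \<Rightarrow> bool" where
  "pbound f T B \<longleftrightarrow> (\<exists>g. g \<in> borel_measurable borel \<and> (\<forall>x. f x * indicator T x \<le> g x) \<and> (\<integral>\<^sup>+x. g x \<partial>lborel) \<le> B)"

lemma pbound_final: "pbound f T B \<Longrightarrow> (\<integral>\<^sup>+x\<in>T. f x \<partial>lborel) \<le> B"
  unfolding pbound_def
  by (metis (no_types, lifting) nn_integral_mono order_trans)

lemma pbound_subset: "pbound f T B \<Longrightarrow> T' \<subseteq> T \<Longrightarrow> pbound f T' B"
  unfolding pbound_def
proof (elim exE conjE, intro exI conjI allI)
  fix g assume "\<forall>x. f x * indicator T x \<le> g x" "T' \<subseteq> T"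
  then show "f x * indicator T' x \<le> g x" for x
    by (metis (no_types, lifting) indicator_simps mult_zero_right subsetD zero_le)
qed

lemma pbound_le: "pbound f T B \<Longrightarrow> B \<le> B' \<Longrightarrow> pbound f T B'"
  unfolding pbound_def by (meson order_trans)

lemma pbound_fun: "pbound f T B \<Longrightarrow> (\<And>x. x \<in> T \<Longrightarrow> f' x \<le> f x) \<Longrightarrow> pbound f' T B"
  unfolding pbound_def
proof (elim exE conjE, intro exI conjI allI)
  fix g x assume "\<forall>x. f x * indicator T x \<le> g x" "\<And>x. x \<in> T \<Longrightarrow> f' x \<le> f x"
  then show "f' x * indicator T x \<le> g x"
    by (metis indicator_simps(1,2) mult.right_neutral mult_zero_right order_trans)
qed

lemma pbound_empty: "pbound f {} 0"
  unfolding pbound_def by (intro exI[of _ "\<lambda>x. 0"]) auto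

lemma pbound_union: assumes "pbound f T1 B1" "pbound f T2 B2" shows "pbound f (T1 \<union> T2) (B1 + B2)"
proof -
  obtain g1 where g1: "g1 \<in> borel_measurable borel" "\<forall>x. f x * indicator T1 x \<le> g1 x" "integral\<^sup>N lborel g1 \<le> B1"
    using assms(1) unfolding pbound_def by blast
  obtain g2 where g2: "g2 \<in> borel_measurable borel" "\<forall>x. f x * indicator T2 x \<le> g2 x" "integral\<^sup>N lborel g2 \<le> B2"
    using assms(2) unfolding pbound_def by blast
  show ?thesis unfolding pbound_def
  proof (intro exI[of _ "\<lambda>x. g1 x + g2 x"] conjI allI)
    show "(\<lambda>x. g1 x + g2 x) \<in> borel_measurable borel" using g1 g2 by measurable
    show "f x * indicator (T1 \<union> T2) x \<le> g1 x + g2 x" for x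
    proof (cases "x \<in> T1")
      case True
      have "f x * indicator (T1 \<union> T2) x = f x * indicator T1 x" using True by (simp add: indicator_def)
      also have "\<dots> \<le> g1 x" using g1(2) by blast
      also have "\<dots> \<le> g1 x + g2 x" by (rule add_increasing2) simp_all
      finally show ?thesis .
    next
      case False
      have "f x * indicator (T1 \<union> T2) x = f x * indicator T2 x" using False by (auto simp: indicator_def)
      also have "\<dots> \<le> g2 x" using g2(2) by blast
      also have "\<dots> \<le> g1 x + g2 x" by (rule add_increasing) simp_all
      finally show ?thesis .
    qed
    have "(\<integral>\<^sup>+x. g1 x + g2 x \<partial>lborel) = integral\<^sup>N lborel g1 + integral\<^sup>N lborel g2"
      using g1 g2 by (intro nn_integral_add) auto
    then show "(\<integral>\<^sup>+x. g1 x + g2 x \<partial>lborel) \<le> B1 + B2" using g1 g2 by (simp add: add_mono)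
  qed
qed

lemma pbound_const:
  assumes "T \<subseteq> cball c r" "\<And>x. x \<in> T \<Longrightarrow> f x \<le> ennreal K" "0 \<le> K" "0 \<le> r"
  shows "pbound f T (ennreal (2 * K * r))"
  unfolding pbound_def
proof (intro exI[of _ "\<lambda>x. ennreal K * indicator (cball c r) x"] conjI allI)
  show "(\<lambda>x. ennreal K * indicator (cball c r) x) \<in> borel_measurable borel"
    by (simp add: cball_eq_atLeastAtMost)
  show "f x * indicator T x \<le> ennreal K * indicator (cball c r) x" for x
    using assms(1) assms(2)[of x] by (auto simp: indicator_def)
  have "(\<integral>\<^sup>+x. ennreal K * indicator (cball c r) x \<partial>lborel) = ennreal K * emeasure lborel (cball c r)"
    by (intro nn_integral_cmult_indicator) (simp add: cball_eq_atLeastAtMost)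
  also have "\<dots> = ennreal (2 * K * r)"
    using assms by (simp add: cball_eq_atLeastAtMost ennreal_mult[symmetric])
  finally show "(\<integral>\<^sup>+x. ennreal K * indicator (cball c r) x \<partial>lborel) \<le> ennreal (2 * K * r)" by simp
qed

lemma pbound_sing:
  assumes "T \<subseteq> cball c d" "\<And>x. x \<in> T \<Longrightarrow> f x \<le> ennreal (K * \<bar>x - p\<bar> powr (-a))" "0 \<le> K" "0 < d"
    "0 \<le> a" "a < 1"
  shows "pbound f T (ennreal (K * (2 * (d powr (1-a) / (1-a)) + 2 * d * d powr (-a))))"
  unfolding pbound_def
proof (intro exI[of _ "\<lambda>x. ennreal K * (ennreal (\<bar>x - p\<bar> powr (-a)) * indicator (cball p d) x)
     + ennreal (K * d powr (-a)) * indicator (cball c d) x"] conjI allI)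
  show "(\<lambda>x. ennreal K * (ennreal (\<bar>x - p\<bar> powr (-a)) * indicator (cball p d) x)
     + ennreal (K * d powr (-a)) * indicator (cball c d) x) \<in> borel_measurable borel"
    by (simp add: cball_eq_atLeastAtMost)
  show "f x * indicator T x \<le> ennreal K * (ennreal (\<bar>x - p\<bar> powr (-a)) * indicator (cball p d) x)
     + ennreal (K * d powr (-a)) * indicator (cball c d) x" for x
  proof (cases "x \<in> T")
    case False then show ?thesis by simp
  next
    case True
    show ?thesis
    proof (cases "\<bar>x - p\<bar> \<le> d")
      case True
      have "f x \<le> ennreal K * (ennreal (\<bar>x - p\<bar> powr (-a)) * indicator (cball p d) x)"
        using assms(2)[OF \<open>x \<in> T\<close>] True assms(3)
        by (simp add: indicator_def dist_real_def abs_minus_commute ennreal_mult)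
      then show ?thesis using \<open>x \<in> T\<close> by (metis add_increasing2 indicator_simps(1) mult.right_neutral zero_le)
    next
      case False
      have "\<bar>x - p\<bar> powr (-a) \<le> d powr (-a)"
        using False assms by (intro powr_mono2') auto
      then have "ennreal (K * \<bar>x - p\<bar> powr (-a)) \<le> ennreal (K * d powr (-a))"
        using assms(3) by (intro ennreal_leI mult_left_mono) auto
      then have "f x \<le> ennreal (K * d powr (-a)) * indicator (cball c d) x"
      proof -
        have "x \<in> cball c d" using assms(1) \<open>x \<in> T\<close> by blast
        then show ?thesis using assms(2)[OF \<open>x \<in> T\<close>] \<open>ennreal (K * \<bar>x - p\<bar> powr (-a)) \<le> ennreal (K * d powr (-a))\<close>
          by simp
      qed
      then show ?thesis using \<open>x \<in> T\<close> by (metis add_increasing indicator_simps(1) mult.right_neutral zero_le)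
    qed
  qed
  have nn: "0 \<le> 2 * (d powr (1-a) / (1-a))" "0 \<le> K * d powr (-a) * (2 * d)" using assms by auto
  have E0: "ennreal K * ennreal (2 * (d powr (1-a) / (1-a))) + ennreal (K * d powr (-a) * (2 * d))
      = ennreal (K * (2 * (d powr (1-a) / (1-a))) + K * d powr (-a) * (2 * d))"
  proof -
    have "ennreal (K * (2 * (d powr (1-a) / (1-a))) + K * d powr (-a) * (2 * d))
        = ennreal (K * (2 * (d powr (1-a) / (1-a)))) + ennreal (K * d powr (-a) * (2 * d))"
      using assms nn by (intro ennreal_plus) auto
    also have "ennreal (K * (2 * (d powr (1-a) / (1-a)))) = ennreal K * ennreal (2 * (d powr (1-a) / (1-a)))"
      using assms nn by (intro ennreal_mult) auto
    finally show ?thesis by simp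
  qed
  have E1: "K * (2 * (d powr (1-a) / (1-a))) + K * d powr (-a) * (2 * d) = K * (2 * (d powr (1-a) / (1-a)) + 2 * d * d powr (-a))"
    by (simp add: algebra_simps)
  have E: "ennreal K * ennreal (2 * (d powr (1-a) / (1-a))) + ennreal (K * d powr (-a) * (2 * d)) = ennreal (K * (2 * (d powr (1-a) / (1-a)) + 2 * d * d powr (-a)))" 
    using E0 E1 by simp
  have "(\<integral>\<^sup>+x. ennreal K * (ennreal (\<bar>x - p\<bar> powr (-a)) * indicator (cball p d) x)
     + ennreal (K * d powr (-a)) * indicator (cball c d) x \<partial>lborel)
    = (\<integral>\<^sup>+x. ennreal K * (ennreal (\<bar>x - p\<bar> powr (-a)) * indicator (cball p d) x) \<partial>lborel)
     + (\<integral>\<^sup>+x. ennreal (K * d powr (-a)) * indicator (cball c d) x \<partial>lborel)"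
    by (intro nn_integral_add) (auto simp: cball_eq_atLeastAtMost)
  also have "(\<integral>\<^sup>+x. ennreal K * (ennreal (\<bar>x - p\<bar> powr (-a)) * indicator (cball p d) x) \<partial>lborel)
      = ennreal K * (\<integral>\<^sup>+x. ennreal (\<bar>x - p\<bar> powr (-a)) * indicator (cball p d) x \<partial>lborel)"
    by (intro nn_integral_cmult) (auto simp: cball_eq_atLeastAtMost)
  also have "\<dots> \<le> ennreal K * ennreal (2 * (d powr (1-a) / (1-a)))"
    using int_sing[of a d p] assms by (intro mult_left_mono) auto
  also have "(\<integral>\<^sup>+x. ennreal (K * d powr (-a)) * indicator (cball c d) x \<partial>lborel) = ennreal (K * d powr (-a)) * emeasure lborel (cball c d)"
    by (intro nn_integral_cmult_indicator) (simp add: cball_eq_atLeastAtMost)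
  also have "\<dots> = ennreal (K * d powr (-a) * (2 * d))"
    using assms by (simp add: cball_eq_atLeastAtMost ennreal_mult[symmetric])
  finally show "(\<integral>\<^sup>+x. ennreal K * (ennreal (\<bar>x - p\<bar> powr (-a)) * indicator (cball p d) x)
     + ennreal (K * d powr (-a)) * indicator (cball c d) x \<partial>lborel) \<le> ennreal (K * (2 * (d powr (1-a) / (1-a)) + 2 * d * d powr (-a)))"
    using E by simp
qed


lemma grow_arith:
  fixes X \<rho> :: real
  assumes "0 < \<rho>" "2 * \<rho> < X"
  shows "2 * sqrt (2 * X) * (\<rho> ^ 3 / X\<^sup>2) \<le> \<rho> * sqrt \<rho>"
proof -
  define s where "s = sqrt X"
  define r where "r = sqrt \<rho>"
  have X: "X = s * s" "s > 0" using assms by (auto simp: s_def)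
  have R: "\<rho> = r * r" "r > 0" using assms by (auto simp: r_def)
  have sq2: "sqrt 2 * sqrt 2 = 2" "sqrt 2 > 0" by auto
  have e1: "sqrt (2 * X) = sqrt 2 * s" by (simp add: s_def real_sqrt_mult)
  have h: "sqrt 2 * r < s"
  proof -
    have "(sqrt 2 * r) * (sqrt 2 * r) < s * s" using assms X R sq2 by (simp add: algebra_simps)
    then show ?thesis using X R sq2 by (metis mult_mono less_le_not_le not_le mult_pos_pos order_le_less)
  qed
  have h3: "2 * sqrt 2 * (r * r * r) \<le> s * s * s"
  proof -
    have "(sqrt 2 * r) * (sqrt 2 * r) * (sqrt 2 * r) \<le> s * s * s"
      using h R sq2 X by (intro mult_mono) (auto intro: mult_pos_pos less_imp_le)
    then show ?thesis using sq2 by (simp add: algebra_simps)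
  qed
  have "2 * sqrt (2 * X) * (\<rho> ^ 3 / X\<^sup>2) = (2 * sqrt 2 * (r * r * r)) * (r * r * r) / (s * s * s)"
    using X R e1 by (simp add: power2_eq_square power3_eq_cube)
  also have "\<dots> \<le> (s * s * s) * (r * r * r) / (s * s * s)"
    using h3 R X by (intro divide_right_mono mult_right_mono) auto
  also have "\<dots> = \<rho> * sqrt \<rho>" using R X by (simp add: r_def)
  finally show ?thesis .
qed

lemma pbound_grow:
  assumes "0 < K0" "\<And>x y. x \<in> T \<Longrightarrow> y \<in> T \<Longrightarrow> \<bar>x - y\<bar> * max (x\<^sup>2) (y\<^sup>2) \<le> K0"
    "\<And>x. x \<in> T \<Longrightarrow> f x \<le> ennreal (K * sqrt \<bar>x\<bar>)" "0 \<le> K"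
  shows "pbound f T (ennreal (K * 7 * sqrt K0))"
proof -
  define \<rho> where "\<rho> = K0 powr (1/3)"
  have \<rho>0: "0 < \<rho>" using assms by (simp add: \<rho>_def)
  have \<rho>3: "\<rho> ^ 3 = K0"
  proof -
    have "\<rho> ^ 3 = \<rho> powr (real 3)" using \<rho>0 by (simp add: powr_realpow)
    also have "\<dots> = K0" using assms by (simp add: \<rho>_def powr_powr)
    finally show ?thesis .
  qed
  have sK0: "sqrt K0 = \<rho> * sqrt \<rho>"
    using \<rho>0 \<rho>3[symmetric] by (simp add: power3_eq_cube real_sqrt_mult)
  define T1 where "T1 = T \<inter> {x. \<bar>x\<bar> \<le> 2 * \<rho>}"
  define T2 where "T2 = T \<inter> {x. \<bar>x\<bar> > 2 * \<rho>}"
  have TT: "T = T1 \<union> T2" by (auto simp: T1_def T2_def)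
  have p1: "pbound f T1 (ennreal (2 * (K * sqrt (2 * \<rho>)) * (2 * \<rho>)))"
  proof (rule pbound_const)
    show "T1 \<subseteq> cball 0 (2 * \<rho>)" by (auto simp: T1_def)
    show "f x \<le> ennreal (K * sqrt (2 * \<rho>))" if "x \<in> T1" for x
    proof -
      have "f x \<le> ennreal (K * sqrt \<bar>x\<bar>)" using assms(3) that by (auto simp: T1_def)
      also have "\<dots> \<le> ennreal (K * sqrt (2 * \<rho>))"
        using that assms(4) by (intro ennreal_leI mult_left_mono) (auto simp: T1_def)
      finally show ?thesis .
    qed
  qed (use \<rho>0 assms in auto)
  have p2: "pbound f T2 (ennreal (K * (\<rho> * sqrt \<rho>)))"
  proof (cases "T2 = {}")
    case True then show ?thesis using pbound_empty pbound_le by fastforce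
  next
    case False
    then obtain x0 where x0: "x0 \<in> T2" by blast
    define X where "X = \<bar>x0\<bar>"
    have X: "2 * \<rho> < X" using x0 by (auto simp: T2_def X_def)
    have Xpos: "0 < X" using X \<rho>0 by linarith
    have near: "\<bar>y - x0\<bar> \<le> K0 / X\<^sup>2" if "y \<in> T2" for y
    proof -
      have "\<bar>y - x0\<bar> * max (y\<^sup>2) (x0\<^sup>2) \<le> K0" using assms(2) that x0 by (auto simp: T2_def)
      moreover have "X\<^sup>2 \<le> max (y\<^sup>2) (x0\<^sup>2)" by (simp add: X_def)
      ultimately have "\<bar>y - x0\<bar> * X\<^sup>2 \<le> K0"
        by (meson abs_ge_zero mult_left_mono order_trans)
      then show ?thesis using Xpos by (simp add: le_divide_eq)
    qed
    have small: "K0 / X\<^sup>2 \<le> X" 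
    proof -
      have "K0 = \<rho> ^ 3" using \<rho>3 by simp
      also have "\<dots> \<le> X ^ 3" using X \<rho>0 by (intro power_mono) auto
      finally show ?thesis using Xpos by (simp add: divide_le_eq power2_eq_square power3_eq_cube)
    qed
    have "pbound f T2 (ennreal (2 * (K * sqrt (2 * X)) * (K0 / X\<^sup>2)))"
    proof (rule pbound_const)
      show "T2 \<subseteq> cball x0 (K0 / X\<^sup>2)" using near by (auto simp: dist_real_def abs_minus_commute)
      show "f y \<le> ennreal (K * sqrt (2 * X))" if "y \<in> T2" for y
      proof -
        have "f y \<le> ennreal (K * sqrt \<bar>y\<bar>)" using assms(3) that by (auto simp: T2_def)
        also have "\<dots> \<le> ennreal (K * sqrt (2 * X))"
        proof -
          have "\<bar>y\<bar> \<le> 2 * X" using near[OF that] small X_def by linarith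
          then show ?thesis using assms(4) by (intro ennreal_leI mult_left_mono) auto
        qed
        finally show ?thesis .
      qed
    qed (use assms Xpos in auto)
    moreover have "2 * (K * sqrt (2 * X)) * (K0 / X\<^sup>2) \<le> K * (\<rho> * sqrt \<rho>)"
    proof -
      have "2 * (K * sqrt (2 * X)) * (K0 / X\<^sup>2) = K * (2 * sqrt (2 * X) * (\<rho> ^ 3 / X\<^sup>2))" using \<rho>3 by simp
      also have "\<dots> \<le> K * (\<rho> * sqrt \<rho>)" using grow_arith[OF \<rho>0 X] assms(4) by (intro mult_left_mono) auto
      finally show ?thesis .
    qed
    ultimately show ?thesis using pbound_le ennreal_leI by blast
  qed
  have "pbound f T (ennreal (2 * (K * sqrt (2 * \<rho>)) * (2 * \<rho>)) + ennreal (K * (\<rho> * sqrt \<rho>)))"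
    using pbound_union[OF p1 p2] TT by simp
  moreover have "ennreal (2 * (K * sqrt (2 * \<rho>)) * (2 * \<rho>)) + ennreal (K * (\<rho> * sqrt \<rho>)) \<le> ennreal (K * 7 * sqrt K0)"
  proof -
    have s2: "sqrt 2 \<le> 3/2" by (rule real_le_lsqrt) (auto simp: power2_eq_square)
    have "2 * (K * sqrt (2 * \<rho>)) * (2 * \<rho>) + K * (\<rho> * sqrt \<rho>) = (4 * sqrt 2 + 1) * (K * (\<rho> * sqrt \<rho>))"
      by (simp add: real_sqrt_mult algebra_simps)
    also have "\<dots> \<le> 7 * (K * (\<rho> * sqrt \<rho>))" using s2 assms(4) \<rho>0 by (intro mult_right_mono) auto
    finally have "2 * (K * sqrt (2 * \<rho>)) * (2 * \<rho>) + K * (\<rho> * sqrt \<rho>) \<le> K * 7 * sqrt K0"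
      using sK0 by (simp add: algebra_simps)
    then have "ennreal (2 * (K * sqrt (2 * \<rho>)) * (2 * \<rho>) + K * (\<rho> * sqrt \<rho>)) \<le> ennreal (K * 7 * sqrt K0)" by (rule ennreal_leI)
    then show ?thesis using assms(4) \<rho>0 by (simp add: ennreal_plus[symmetric] del: ennreal_plus)
  qed
  ultimately show ?thesis using pbound_le by blast
qed

definition Qf :: "real \<Rightarrow> real \<Rightarrow> real \<Rightarrow> real" where
  "Qf \<xi> x y = x\<^sup>2 + x * y + y\<^sup>2 - 4 * \<xi> * (x+y) + 4 * \<xi>\<^sup>2"

lemma psi_diff: "\<bar>Psi \<xi> x - Psi \<xi> y\<bar> = 3/4 * \<bar>x - y\<bar> * \<bar>Qf \<xi> x y\<bar>"
proof -
  have e: "Psi \<xi> x - Psi \<xi> y = (-(3/4)) * ((x - y) * Qf \<xi> x y)"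
    unfolding Psi_def Qf_def power2_eq_square by algebra
  have "\<bar>(-(3/4::real)) * ((x - y) * Qf \<xi> x y)\<bar> = 3/4 * (\<bar>x - y\<bar> * \<bar>Qf \<xi> x y\<bar>)"
    by (simp only: abs_mult)
  then show ?thesis by (simp only: e mult.assoc)
qed

lemma Q_A: assumes "0 \<le> \<xi>" "\<bar>x\<bar> \<le> \<xi>/2" "\<bar>y\<bar> \<le> \<xi>/2" shows "3/4 * \<xi>\<^sup>2 \<le> Qf \<xi> x y"
proof -
  define a b where "a = \<xi>/2 - x" and "b = \<xi>/2 - y"
  have "a \<ge> 0" "b \<ge> 0" using assms by (auto simp: a_def b_def)
  have e: "Qf \<xi> x y - 3/4 * \<xi>\<^sup>2 = 5/2 * (\<xi> * a) + 5/2 * (\<xi> * b) + a * a + a * b + b * b"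
    unfolding Qf_def power2_eq_square a_def b_def by (simp add: field_simps)
  have "0 \<le> 5/2 * (\<xi> * a) + 5/2 * (\<xi> * b) + a * a + a * b + b * b"
    using \<open>a \<ge> 0\<close> \<open>b \<ge> 0\<close> assms(1) by simp
  then show ?thesis using e by linarith
qed

lemma Q_B: assumes "0 \<le> \<xi>" "x \<le> 0" "y \<le> 0" shows "max (x\<^sup>2) (y\<^sup>2) \<le> Qf \<xi> x y"
proof -
  have p: "0 \<le> x * y" "0 \<le> \<xi> * (-x)" "0 \<le> \<xi> * (-y)" "0 \<le> x * x" "0 \<le> y * y" "0 \<le> \<xi> * \<xi>"
    using assms by (auto simp: mult_nonpos_nonpos intro!: mult_nonneg_nonneg mult_nonneg_nonpos)
  have e1: "Qf \<xi> x y - y\<^sup>2 = x * x + x * y + 4 * (\<xi> * (-x)) + 4 * (\<xi> * (-y)) + 4 * (\<xi> * \<xi>)"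
    unfolding Qf_def power2_eq_square by (simp add: field_simps)
  have e2: "Qf \<xi> x y - x\<^sup>2 = y * y + x * y + 4 * (\<xi> * (-x)) + 4 * (\<xi> * (-y)) + 4 * (\<xi> * \<xi>)"
    unfolding Qf_def power2_eq_square by (simp add: field_simps)
  have "y\<^sup>2 \<le> Qf \<xi> x y" using e1 p by linarith
  moreover have "x\<^sup>2 \<le> Qf \<xi> x y" using e2 p by linarith
  ultimately show ?thesis by simp
qed

lemma Q_C: assumes "0 \<le> \<xi>" "3 * \<xi> \<le> x" "3 * \<xi> \<le> y" shows "max (x\<^sup>2) (y\<^sup>2) \<le> 3 * Qf \<xi> x y"
proof -
  have e1: "3 * Qf \<xi> x y - x\<^sup>2 = (x-y) * (2 * x+y) + 4 * (x * (y-3 * \<xi>)) + 4 * (y * (y-3 * \<xi>)) + 12 * (\<xi> * \<xi>)"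
    unfolding Qf_def power2_eq_square by (simp add: field_simps)
  have e2: "3 * Qf \<xi> x y - y\<^sup>2 = (y-x) * (2 * y+x) + 4 * (y * (x-3 * \<xi>)) + 4 * (x * (x-3 * \<xi>)) + 12 * (\<xi> * \<xi>)"
    unfolding Qf_def power2_eq_square by (simp add: field_simps)
  show ?thesis
  proof (cases "y \<le> x")
    case True
    have "y\<^sup>2 \<le> x\<^sup>2" using assms True by (intro power_mono) auto
    moreover have "0 \<le> (x-y) * (2 * x+y) + 4 * (x * (y-3 * \<xi>)) + 4 * (y * (y-3 * \<xi>)) + 12 * (\<xi> * \<xi>)"
      using assms True by (intro add_nonneg_nonneg mult_nonneg_nonneg) auto
    ultimately show ?thesis using e1 by (simp add: max_def)
  next
    case False
    have "x\<^sup>2 \<le> y\<^sup>2" using assms False by (intro power_mono) auto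
    moreover have "0 \<le> (y-x) * (2 * y+x) + 4 * (y * (x-3 * \<xi>)) + 4 * (x * (x-3 * \<xi>)) + 12 * (\<xi> * \<xi>)"
      using assms False by (intro add_nonneg_nonneg mult_nonneg_nonneg) auto
    ultimately show ?thesis using e2 by (simp add: max_def)
  qed
qed

lemma Q_E1: assumes "0 \<le> \<xi>" "x \<le> 2 * \<xi>/3" "y \<le> 2 * \<xi>/3" shows "2 * \<xi> * \<bar>x-y\<bar> \<le> Qf \<xi> x y"
proof -
  define a b where "a = 2 * \<xi>/3 - x" and "b = 2 * \<xi>/3 - y"
  have ab: "a \<ge> 0" "b \<ge> 0" using assms by (auto simp: a_def b_def)
  have e1: "Qf \<xi> x y - 2 * \<xi> * (y-x) = 4 * (\<xi> * b) + a * a + a * b + b * b"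
    unfolding Qf_def power2_eq_square a_def b_def by (simp add: field_simps)
  have e2: "Qf \<xi> x y - 2 * \<xi> * (x-y) = 4 * (\<xi> * a) + a * a + a * b + b * b"
    unfolding Qf_def power2_eq_square a_def b_def by (simp add: field_simps)
  have "0 \<le> 4 * (\<xi> * b) + a * a + a * b + b * b" "0 \<le> 4 * (\<xi> * a) + a * a + a * b + b * b" using ab assms(1) by auto
  then show ?thesis using e1 e2 by (auto simp: abs_if)
qed

lemma Q_E1': assumes "0 \<le> \<xi>" "2 * \<xi>/3 \<le> x" "x \<le> 5 * \<xi>/6" "2 * \<xi>/3 \<le> y" "y \<le> 5 * \<xi>/6"
  shows "5/3 * \<xi> * \<bar>x-y\<bar> \<le> - Qf \<xi> x y"
proof -
  define s t u v where "s = x - 2 * \<xi>/3" and "t = y - 2 * \<xi>/3" and "u = 5 * \<xi>/6 - x" and "v = 5 * \<xi>/6 - y"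
  have st: "s \<ge> 0" "t \<ge> 0" "u \<ge> 0" "v \<ge> 0" using assms by (auto simp: s_def t_def u_def v_def)
  have e1: "- Qf \<xi> x y - 5/3 * \<xi> * (y-x) = 10/3 * (\<xi> * s) + 1/6 * (\<xi> * t) + s * u + s * v + t * v"
    unfolding Qf_def power2_eq_square s_def t_def u_def v_def by (simp add: field_simps)
  have e2: "- Qf \<xi> x y - 5/3 * \<xi> * (x-y) = 10/3 * (\<xi> * t) + 1/6 * (\<xi> * s) + t * v + t * u + s * u"
    unfolding Qf_def power2_eq_square s_def t_def u_def v_def by (simp add: field_simps)
  have "0 \<le> 10/3 * (\<xi> * s) + 1/6 * (\<xi> * t) + s * u + s * v + t * v" "0 \<le> 10/3 * (\<xi> * t) + 1/6 * (\<xi> * s) + t * v + t * u + s * u"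
    using st assms(1) by auto
  then show ?thesis using e1 e2 by (auto simp: abs_if)
qed

lemma Q_E2: assumes "0 \<le> \<xi>" "5 * \<xi>/6 \<le> x" "x \<le> 3 * \<xi>/2" "5 * \<xi>/6 \<le> y" "y \<le> 3 * \<xi>/2"
  shows "\<xi>\<^sup>2/2 \<le> - Qf \<xi> x y"
proof -
  define a b p q where "a = x - 5 * \<xi>/6" and "b = y - 5 * \<xi>/6" and "p = 3 * \<xi>/2 - x" and "q = 3 * \<xi>/2 - y"
  have st: "a \<ge> 0" "b \<ge> 0" "p \<ge> 0" "q \<ge> 0" using assms by (auto simp: a_def b_def p_def q_def)
  have e: "- Qf \<xi> x y - \<xi>\<^sup>2/2 = 1/12 * (\<xi> * \<xi>) + 1/2 * (\<xi> * a) + 1/2 * (\<xi> * b) + 1/2 * ((a-b) * (a-b)) + 3/2 * (a * p) + 3/2 * (b * q)"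
    unfolding Qf_def power2_eq_square a_def b_def p_def q_def by (simp add: field_simps)
  have "0 \<le> 1/12 * (\<xi> * \<xi>) + 1/2 * (\<xi> * a) + 1/2 * (\<xi> * b) + 1/2 * ((a-b) * (a-b)) + 3/2 * (a * p) + 3/2 * (b * q)"
    using st assms(1) by auto
  then show ?thesis using e by linarith
qed

lemma Q_E3: assumes "0 \<le> \<xi>" "3 * \<xi>/2 \<le> x" "x \<le> 2 * \<xi>" "3 * \<xi>/2 \<le> y" "y \<le> 2 * \<xi>"
  shows "\<xi> * \<bar>x-y\<bar> \<le> - Qf \<xi> x y"
proof -
  define a b u v where "a = 2 * \<xi> - x" and "b = 2 * \<xi> - y" and "u = x - 3 * \<xi>/2" and "v = y - 3 * \<xi>/2"
  have st: "a \<ge> 0" "b \<ge> 0" "u \<ge> 0" "v \<ge> 0" using assms by (auto simp: a_def b_def u_def v_def)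
  have e1: "- Qf \<xi> x y - \<xi> * (b-a) = 2 * (\<xi> * a) + 1/2 * (\<xi> * b) + a * u + a * v + b * v"
    unfolding Qf_def power2_eq_square a_def b_def u_def v_def by (simp add: field_simps)
  have e2: "- Qf \<xi> x y - \<xi> * (a-b) = 2 * (\<xi> * b) + 1/2 * (\<xi> * a) + b * v + b * u + a * u"
    unfolding Qf_def power2_eq_square a_def b_def u_def v_def by (simp add: field_simps)
  have "0 \<le> 2 * (\<xi> * a) + 1/2 * (\<xi> * b) + a * u + a * v + b * v" "0 \<le> 2 * (\<xi> * b) + 1/2 * (\<xi> * a) + b * v + b * u + a * u"
    using st assms(1) by auto
  moreover have "\<bar>x - y\<bar> = \<bar>b - a\<bar>" by (simp add: a_def b_def)
  ultimately show ?thesis using e1 e2 by (auto simp: abs_if)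
qed

lemma Q_E3': assumes "0 \<le> \<xi>" "2 * \<xi> \<le> x" "2 * \<xi> \<le> y"
  shows "2 * \<xi> * \<bar>x-y\<bar> \<le> Qf \<xi> x y"
proof -
  define s t where "s = x - 2 * \<xi>" and "t = y - 2 * \<xi>"
  have st: "s \<ge> 0" "t \<ge> 0" using assms by (auto simp: s_def t_def)
  have e1: "Qf \<xi> x y - 2 * \<xi> * (y-x) = 4 * (\<xi> * s) + s * s + s * t + t * t"
    unfolding Qf_def power2_eq_square s_def t_def by (simp add: field_simps)
  have e2: "Qf \<xi> x y - 2 * \<xi> * (x-y) = 4 * (\<xi> * t) + s * s + s * t + t * t"
    unfolding Qf_def power2_eq_square s_def t_def by (simp add: field_simps)
  have "0 \<le> 4 * (\<xi> * s) + s * s + s * t + t * t" "0 \<le> 4 * (\<xi> * t) + s * s + s * t + t * t" using st assms(1) by auto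
  then show ?thesis using e1 e2 by (auto simp: abs_if)
qed

lemma jb_pos: "0 < jb x" by (simp add: jb_def add_pos_nonneg)
lemma jb_ge1: "1 \<le> jb x" by (simp add: jb_def)
lemma jb_abs: "\<bar>x\<bar> \<le> jb x" unfolding jb_def by (rule real_le_rsqrt) simp
lemma jb_minus: "jb (-x) = jb x" by (simp add: jb_def)
lemma jb_mono: "\<bar>x\<bar> \<le> \<bar>y\<bar> \<Longrightarrow> jb x \<le> jb y"
  unfolding jb_def by (simp add: abs_le_square_iff)
lemma jb_up: assumes "1 \<le> c" shows "jb (c * x) \<le> c * jb x"
proof -
  have "1 + (c*x)\<^sup>2 \<le> (c * jb x)\<^sup>2"
    using assms by (simp add: jb_def power_mult_distrib algebra_simps)
  then show ?thesis unfolding jb_def using assms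
    using jb_pos[of x] by (intro real_le_lsqrt) auto
qed
lemma jb_down: assumes "0 < c" "c \<le> 1" shows "c * jb x \<le> jb (c * x)"
proof -
  have "(c * jb x)\<^sup>2 \<le> 1 + (c*x)\<^sup>2"
  proof -
    have "c\<^sup>2 \<le> 1" using assms by (simp add: power_le_one)
    then show ?thesis using assms by (simp add: jb_def power_mult_distrib algebra_simps)
  qed
  then show ?thesis unfolding jb_def by (rule real_le_rsqrt)
qed
lemma jb_le_2: assumes "1 \<le> x" shows "jb x \<le> 2 * x"
proof -
  have "1 * 1 \<le> x * x" using assms by (intro mult_mono) auto
  then show ?thesis unfolding jb_def using assms by (intro real_le_lsqrt) (auto simp: power2_eq_square)
qed

lemma neg_pow: fixes c J Z \<nu> :: real assumes "0 < c" "c \<le> 1" "0 < J" "c * J \<le> Z" "0 \<le> \<nu>" "\<nu> \<le> 1"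
  shows "Z powr (-\<nu>) \<le> (1/c) * J powr (-\<nu>)"
proof -
  have "Z powr (-\<nu>) \<le> (c * J) powr (-\<nu>)" by (rule Transcendental.powr_mono2') (use assms in auto)
  also have "\<dots> = c powr (-\<nu>) * J powr (-\<nu>)" using assms by (simp add: powr_mult)
  also have "c powr (-\<nu>) \<le> c powr (-1)" using assms by (intro powr_mono') auto
  then have "c powr (-\<nu>) * J powr (-\<nu>) \<le> (1/c) * J powr (-\<nu>)"
    using assms by (intro mult_right_mono) (auto simp: powr_minus_divide)
  finally show ?thesis .
qed

lemma pos_pow: fixes c J Z \<mu> :: real assumes "1 \<le> c" "0 < J" "0 \<le> Z" "Z \<le> c * J" "0 \<le> \<mu>" "\<mu> \<le> 1"
  shows "Z powr \<mu> \<le> c * J powr \<mu>"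
proof -
  have "Z powr \<mu> \<le> (c * J) powr \<mu>" by (rule Transcendental.powr_mono2) (use assms in auto)
  also have "\<dots> = c powr \<mu> * J powr \<mu>" using assms by (simp add: powr_mult)
  also have "c powr \<mu> \<le> c powr 1" using assms by (intro powr_mono) auto
  then have "c powr \<mu> * J powr \<mu> \<le> c * J powr \<mu>"
    using assms by (intro mult_right_mono) auto
  finally show ?thesis .
qed

definition W :: "real \<Rightarrow> real \<Rightarrow> real \<Rightarrow> real \<Rightarrow> real" where
  "W \<mu> \<nu> \<xi> \<eta> = max \<bar>\<xi>\<bar> \<bar>\<eta>\<bar> * jb \<xi> powr \<mu> / (sqrt \<bar>\<eta>\<bar> * jb (\<xi> - \<eta>) powr \<nu>)"

lemma W_minus: "W \<mu> \<nu> (-\<xi>) (-\<eta>) = W \<mu> \<nu> \<xi> \<eta>"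
  unfolding W_def by (simp add: jb_minus[of "\<xi> - \<eta>", symmetric] jb_minus)

lemma W_zero: "W \<mu> \<nu> \<xi> 0 = 0" by (simp add: W_def)

lemma W_master:
  assumes "\<eta> \<noteq> 0" "max \<bar>\<xi>\<bar> \<bar>\<eta>\<bar> \<le> A" "jb \<xi> powr \<mu> \<le> P" "jb (\<xi> - \<eta>) powr (-\<nu>) \<le> N" "1 / sqrt \<bar>\<eta>\<bar> \<le> S"
  shows "W \<mu> \<nu> \<xi> \<eta> \<le> A * P * N * S"
proof -
  have j1: "0 < jb \<xi> powr \<mu>" "0 < jb (\<xi> - \<eta>) powr (-\<nu>)" using jb_pos[of \<xi>] jb_pos[of "\<xi> - \<eta>"] by auto
  have "W \<mu> \<nu> \<xi> \<eta> = max \<bar>\<xi>\<bar> \<bar>\<eta>\<bar> * jb \<xi> powr \<mu> * jb (\<xi> - \<eta>) powr (-\<nu>) * (1 / sqrt \<bar>\<eta>\<bar>)"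
  proof -
    have "jb (\<xi> - \<eta>) powr (-\<nu>) = 1 / jb (\<xi> - \<eta>) powr \<nu>" by (simp add: powr_minus divide_inverse)
    then show ?thesis unfolding W_def by simp
  qed
  also have "\<dots> \<le> A * P * N * S"
  proof -
    have "0 \<le> max \<bar>\<xi>\<bar> \<bar>\<eta>\<bar>" by simp
    then have A0: "0 \<le> A" using assms(2) by linarith
    have P0: "0 \<le> P" using j1 assms(3) by linarith
    have N0: "0 \<le> N" using j1 assms(4) by linarith
    have "max \<bar>\<xi>\<bar> \<bar>\<eta>\<bar> * jb \<xi> powr \<mu> \<le> A * P" using assms(2,3) j1 A0 by (rule_tac mult_mono) auto
    moreover have "0 \<le> max \<bar>\<xi>\<bar> \<bar>\<eta>\<bar> * jb \<xi> powr \<mu>" using j1 by simp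
    ultimately have "max \<bar>\<xi>\<bar> \<bar>\<eta>\<bar> * jb \<xi> powr \<mu> * jb (\<xi> - \<eta>) powr (-\<nu>) \<le> A * P * N"
      using assms(4) j1 A0 P0 by (rule_tac mult_mono) auto
    moreover have "0 \<le> max \<bar>\<xi>\<bar> \<bar>\<eta>\<bar> * jb \<xi> powr \<mu> * jb (\<xi> - \<eta>) powr (-\<nu>)" using j1 by simp
    moreover have "0 \<le> 1 / sqrt \<bar>\<eta>\<bar>" by simp
    ultimately show ?thesis using assms(5) A0 P0 N0 by (rule_tac mult_mono) auto
  qed
  finally show ?thesis .
qed

lemma jb_abs_eq: "jb \<bar>x\<bar> = jb x" by (simp add: jb_def)

lemma jb_comb: "jb x powr \<mu> * jb x powr (-\<nu>) = jb x powr (\<mu> - \<nu>)"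
  by (simp add: powr_add[symmetric])

lemma jb_neg_le: assumes "0 < x" "x \<le> jb y" "e \<le> 0" shows "jb y powr e \<le> x powr e"
  by (rule powr_mono2') (use assms in auto)

lemma inv_sqrt: assumes "0 < x" shows "1 / sqrt x = x powr (-1/2)"
proof -
  have "x powr (-1/2) = x powr (-(1/2))" by simp
  also have "\<dots> = 1 / (x powr (1/2))" by (rule powr_minus_divide)
  also have "\<dots> = 1 / sqrt x" using assms by (simp add: powr_half_sqrt)
  finally show ?thesis by simp
qed

lemma div_sqrt: assumes "0 \<le> x" shows "x * (1 / sqrt x) = sqrt x"
  using real_div_sqrt[OF assms] by simp

lemma inv_sqrt_half: assumes "0 < \<xi>" "\<xi>/2 \<le> \<eta>" shows "1 / sqrt \<bar>\<eta>\<bar> \<le> sqrt 2 / sqrt \<xi>"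
proof -
  have "sqrt (\<xi>/2) \<le> sqrt \<bar>\<eta>\<bar>" using assms by simp
  then have "1 / sqrt \<bar>\<eta>\<bar> \<le> 1 / sqrt (\<xi>/2)" using assms by (intro divide_left_mono) auto
  also have "\<dots> = sqrt 2 / sqrt \<xi>" by (simp add: real_sqrt_divide)
  finally show ?thesis .
qed

context
  fixes \<mu> \<nu> :: real
  assumes mn: "0 < \<mu>" "\<mu> < \<nu>" "\<nu> < 1/2"
begin

lemma WA: assumes "0 \<le> \<xi>" "\<eta> \<noteq> 0" "\<bar>\<eta>\<bar> \<le> \<xi>/2"
  shows "W \<mu> \<nu> \<xi> \<eta> \<le> (2 * \<xi> * \<xi> powr (\<mu> - \<nu>)) * \<bar>\<eta> - 0\<bar> powr (-1/2)"
proof -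
  have xi: "0 < \<xi>" using assms by auto
  have N: "jb (\<xi> - \<eta>) powr (-\<nu>) \<le> (1/(1/2)) * jb \<xi> powr (-\<nu>)"
  proof (rule neg_pow)
    have "1/2 * jb \<xi> \<le> jb (1/2 * \<xi>)" by (rule jb_down) auto
    also have "\<dots> \<le> jb (\<xi> - \<eta>)" using assms by (intro jb_mono) auto
    finally show "1/2 * jb \<xi> \<le> jb (\<xi> - \<eta>)" .
  qed (use mn jb_pos in auto)
  have "W \<mu> \<nu> \<xi> \<eta> \<le> \<xi> * jb \<xi> powr \<mu> * (2 * jb \<xi> powr (-\<nu>)) * \<bar>\<eta>\<bar> powr (-1/2)"
    by (rule W_master) (use assms N inv_sqrt[of "\<bar>\<eta>\<bar>"] in auto)
  also have "\<dots> = 2 * \<xi> * jb \<xi> powr (\<mu> - \<nu>) * \<bar>\<eta>\<bar> powr (-1/2)"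
    by (simp add: jb_comb[symmetric] algebra_simps)
  also have "\<dots> \<le> 2 * \<xi> * \<xi> powr (\<mu> - \<nu>) * \<bar>\<eta>\<bar> powr (-1/2)"
    using jb_neg_le[of \<xi> \<xi> "\<mu> - \<nu>"] xi jb_abs[of \<xi>] mn by (intro mult_right_mono mult_left_mono) auto
  finally show ?thesis by simp
qed

lemma WB: assumes "0 \<le> \<xi>" "\<eta> < 0" "\<xi>/2 \<le> \<bar>\<eta>\<bar>"
  shows "W \<mu> \<nu> \<xi> \<eta> \<le> (4 * \<bar>\<eta>\<bar> powr (\<mu> - \<nu>)) * sqrt \<bar>\<eta>\<bar>"
proof -
  have P: "jb \<xi> powr \<mu> \<le> 2 * jb \<eta> powr \<mu>"
  proof (rule pos_pow)
    have "jb \<xi> \<le> jb (2 * \<bar>\<eta>\<bar>)" using assms by (intro jb_mono) auto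
    also have "\<dots> \<le> 2 * jb \<bar>\<eta>\<bar>" by (rule jb_up) auto
    finally show "jb \<xi> \<le> 2 * jb \<eta>" by (simp add: jb_abs_eq)
  qed (use mn jb_pos[of \<xi>] jb_pos[of \<eta>] in auto)
  have N: "jb (\<xi> - \<eta>) powr (-\<nu>) \<le> (1/1) * jb \<eta> powr (-\<nu>)"
    by (rule neg_pow) (use mn jb_pos assms in \<open>auto intro!: jb_mono\<close>)
  have "W \<mu> \<nu> \<xi> \<eta> \<le> (2 * \<bar>\<eta>\<bar>) * (2 * jb \<eta> powr \<mu>) * jb \<eta> powr (-\<nu>) * (1 / sqrt \<bar>\<eta>\<bar>)"
    by (rule W_master) (use assms P N in auto)
  also have "\<dots> = 4 * jb \<eta> powr (\<mu> - \<nu>) * (\<bar>\<eta>\<bar> * (1 / sqrt \<bar>\<eta>\<bar>))"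
    by (simp add: jb_comb[symmetric] algebra_simps)
  also have "\<dots> = 4 * jb \<eta> powr (\<mu> - \<nu>) * sqrt \<bar>\<eta>\<bar>" using div_sqrt[of "\<bar>\<eta>\<bar>"] by simp
  also have "\<dots> \<le> 4 * \<bar>\<eta>\<bar> powr (\<mu> - \<nu>) * sqrt \<bar>\<eta>\<bar>"
    using jb_neg_le[of "\<bar>\<eta>\<bar>" \<eta> "\<mu> - \<nu>"] assms jb_abs[of \<eta>] mn by (intro mult_right_mono mult_left_mono) auto
  finally show ?thesis by simp
qed

lemma WC: assumes "0 \<le> \<xi>" "0 < \<eta>" "3 * \<xi> \<le> \<eta>"
  shows "W \<mu> \<nu> \<xi> \<eta> \<le> (3/2 * \<bar>\<eta>\<bar> powr (\<mu> - \<nu>)) * sqrt \<bar>\<eta>\<bar>"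
proof -
  have P: "jb \<xi> powr \<mu> \<le> 1 * jb \<eta> powr \<mu>"
    by (rule pos_pow) (use mn jb_pos[of \<xi>] jb_pos[of \<eta>] assms in \<open>auto intro!: jb_mono\<close>)
  have N: "jb (\<xi> - \<eta>) powr (-\<nu>) \<le> (1/(2/3)) * jb \<eta> powr (-\<nu>)"
  proof (rule neg_pow)
    have "2/3 * jb \<eta> \<le> jb (2/3 * \<eta>)" by (rule jb_down) auto
    also have "\<dots> \<le> jb (\<xi> - \<eta>)" using assms by (intro jb_mono) auto
    finally show "2/3 * jb \<eta> \<le> jb (\<xi> - \<eta>)" .
  qed (use mn jb_pos in auto)
  have "W \<mu> \<nu> \<xi> \<eta> \<le> \<bar>\<eta>\<bar> * (1 * jb \<eta> powr \<mu>) * (3/2 * jb \<eta> powr (-\<nu>)) * (1 / sqrt \<bar>\<eta>\<bar>)"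
    by (rule W_master) (use assms P N in auto)
  also have "\<dots> = 3/2 * jb \<eta> powr (\<mu> - \<nu>) * (\<bar>\<eta>\<bar> * (1 / sqrt \<bar>\<eta>\<bar>))"
    by (simp add: jb_comb[symmetric] algebra_simps)
  also have "\<dots> = 3/2 * jb \<eta> powr (\<mu> - \<nu>) * sqrt \<bar>\<eta>\<bar>" using div_sqrt[of "\<bar>\<eta>\<bar>"] by simp
  also have "\<dots> \<le> 3/2 * \<bar>\<eta>\<bar> powr (\<mu> - \<nu>) * sqrt \<bar>\<eta>\<bar>"
    using jb_neg_le[of "\<bar>\<eta>\<bar>" \<eta> "\<mu> - \<nu>"] assms jb_abs[of \<eta>] mn by (intro mult_right_mono mult_left_mono) auto
  finally show ?thesis by simp
qed

lemma WE13: assumes "0 < \<xi>" "\<xi>/2 \<le> \<eta>" "\<eta> \<le> 3 * \<xi>" "\<xi>/6 \<le> \<bar>\<xi> - \<eta>\<bar>"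
  shows "W \<mu> \<nu> \<xi> \<eta> \<le> 26 * sqrt \<xi> * \<xi> powr (\<mu> - \<nu>)"
proof -
  have N: "jb (\<xi> - \<eta>) powr (-\<nu>) \<le> (1/(1/6)) * jb \<xi> powr (-\<nu>)"
  proof (rule neg_pow)
    have "1/6 * jb \<xi> \<le> jb (1/6 * \<xi>)" by (rule jb_down) auto
    also have "\<dots> \<le> jb (\<xi> - \<eta>)" using assms by (intro jb_mono) auto
    finally show "1/6 * jb \<xi> \<le> jb (\<xi> - \<eta>)" .
  qed (use mn jb_pos in auto)
  have "W \<mu> \<nu> \<xi> \<eta> \<le> (3 * \<xi>) * jb \<xi> powr \<mu> * (6 * jb \<xi> powr (-\<nu>)) * (sqrt 2 / sqrt \<xi>)"
    by (rule W_master) (use assms N inv_sqrt_half[of \<xi> \<eta>] in auto)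
  also have "\<dots> = 18 * sqrt 2 * jb \<xi> powr (\<mu> - \<nu>) * (\<xi> * (1 / sqrt \<xi>))"
    by (simp add: jb_comb[symmetric] algebra_simps)
  also have "\<dots> = 18 * sqrt 2 * jb \<xi> powr (\<mu> - \<nu>) * sqrt \<xi>" using assms div_sqrt[of \<xi>] by simp
  also have "\<dots> \<le> 18 * sqrt 2 * \<xi> powr (\<mu> - \<nu>) * sqrt \<xi>"
    using jb_neg_le[of \<xi> \<xi> "\<mu> - \<nu>"] assms jb_abs[of \<xi>] mn by (intro mult_right_mono mult_left_mono) auto
  also have "\<dots> \<le> 26 * \<xi> powr (\<mu> - \<nu>) * sqrt \<xi>"
  proof -
    have "sqrt 2 \<le> 13/9" by (rule real_le_lsqrt) (auto simp: power2_eq_square)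
    then show ?thesis using assms by (intro mult_right_mono) auto
  qed
  finally show ?thesis by (simp add: algebra_simps)
qed

lemma WE2: assumes "1 \<le> \<xi>" "5*\<xi>/6 \<le> \<eta>" "\<eta> \<le> 3*\<xi>/2" "\<eta> \<noteq> \<xi>"
  shows "W \<mu> \<nu> \<xi> \<eta> \<le> (6 * sqrt \<xi> * \<xi> powr \<mu>) * \<bar>\<eta> - \<xi>\<bar> powr (-\<nu>)"
proof -
  have P: "jb \<xi> powr \<mu> \<le> 2 * \<xi> powr \<mu>"
    by (rule pos_pow) (use mn assms jb_le_2[of \<xi>] jb_pos[of \<xi>] in auto)
  have N: "jb (\<xi> - \<eta>) powr (-\<nu>) \<le> \<bar>\<eta> - \<xi>\<bar> powr (-\<nu>)"
  proof (rule powr_mono2')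
    show "\<bar>\<eta> - \<xi>\<bar> \<le> jb (\<xi> - \<eta>)" using jb_abs[of "\<xi> - \<eta>"] by (simp add: abs_minus_commute)
  qed (use mn assms in auto)
  have "W \<mu> \<nu> \<xi> \<eta> \<le> (2 * \<xi>) * (2 * \<xi> powr \<mu>) * \<bar>\<eta> - \<xi>\<bar> powr (-\<nu>) * (sqrt 2 / sqrt \<xi>)"
    by (rule W_master) (use assms P N inv_sqrt_half[of \<xi> \<eta>] in auto)
  also have "\<dots> = 4 * sqrt 2 * \<xi> powr \<mu> * \<bar>\<eta> - \<xi>\<bar> powr (-\<nu>) * (\<xi> * (1 / sqrt \<xi>))"
    by (simp add: algebra_simps)
  also have "\<dots> = (4 * sqrt 2) * (sqrt \<xi> * \<xi> powr \<mu> * \<bar>\<eta> - \<xi>\<bar> powr (-\<nu>))" using assms div_sqrt[of \<xi>] by simp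
  also have "\<dots> \<le> 6 * (sqrt \<xi> * \<xi> powr \<mu> * \<bar>\<eta> - \<xi>\<bar> powr (-\<nu>))"
  proof -
    have "sqrt 2 \<le> 3/2" by (rule real_le_lsqrt) (auto simp: power2_eq_square)
    moreover have "0 \<le> sqrt \<xi> * \<xi> powr \<mu> * \<bar>\<eta> - \<xi>\<bar> powr (-\<nu>)" using assms by simp
    ultimately show ?thesis by (intro mult_right_mono) auto
  qed
  finally show ?thesis by (simp add: algebra_simps)
qed

lemma WEslow: assumes "0 < \<xi>" "\<xi> \<le> 1" "\<xi>/2 \<le> \<eta>" "\<eta> \<le> 3 * \<xi>"
  shows "W \<mu> \<nu> \<xi> \<eta> \<le> 9"
proof -
  have P: "jb \<xi> powr \<mu> \<le> 2 * 1 powr \<mu>"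
  proof (rule pos_pow)
    have "jb \<xi> \<le> jb 1" using assms by (intro jb_mono) auto
    also have "\<dots> \<le> 2" unfolding jb_def by (rule real_le_lsqrt) auto
    finally show "jb \<xi> \<le> 2 * 1" by simp
  qed (use mn jb_pos[of \<xi>] in auto)
  have N: "jb (\<xi> - \<eta>) powr (-\<nu>) \<le> 1 powr (-\<nu>)"
    by (rule powr_mono2') (use mn jb_ge1 in auto)
  have "W \<mu> \<nu> \<xi> \<eta> \<le> (3 * \<xi>) * 2 * 1 * (sqrt 2 / sqrt \<xi>)"
    by (rule W_master) (use assms P N inv_sqrt_half[of \<xi> \<eta>] in auto)
  also have "\<dots> = 6 * sqrt 2 * (\<xi> * (1 / sqrt \<xi>))" by (simp add: algebra_simps)
  also have "\<dots> = 6 * sqrt 2 * sqrt \<xi>" using assms div_sqrt[of \<xi>] by simp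
  also have "\<dots> \<le> 6 * (3/2) * 1"
  proof -
    have "sqrt 2 \<le> 3/2" by (rule real_le_lsqrt) (auto simp: power2_eq_square)
    moreover have "sqrt \<xi> \<le> 1" using assms by simp
    ultimately show ?thesis using assms by (intro mult_mono) auto
  qed
  finally show ?thesis by simp
qed

end

lemma pbound_point: "pbound (\<lambda>x. ennreal (h x)) {c} 0"
  using pbound_const[of "{c}" c 0 "\<lambda>x. ennreal (h x)" "max 0 (h c)"] by (simp add: ennreal_leI)

lemma sing_half: assumes "0 < d" shows "2 * (d powr (1 - 1/2) / (1 - 1/2)) + 2 * d * d powr (-(1/2)) = 6 * sqrt d"
proof -
  have a: "d powr (1/2) = sqrt d" using assms by (simp add: powr_half_sqrt)
  have b: "d * d powr (-(1/2)) = sqrt d"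
  proof -
    have "d powr (-(1/2)) = 1 / sqrt d" using a by (simp add: powr_minus_divide)
    then show ?thesis using real_div_sqrt[of d] assms by simp
  qed
  have c: "(1::real) - 1/2 = 1/2" by simp
  show ?thesis unfolding c using a b by simp
qed

definition Sset :: "real \<Rightarrow> real \<Rightarrow> real \<Rightarrow> real \<Rightarrow> real set" where
  "Sset \<xi> \<alpha> M R = {\<eta>. R \<le> \<bar>\<xi>\<bar> + \<bar>\<eta>\<bar> \<and> \<bar>Psi \<xi> \<eta> - \<alpha>\<bar> < M}"

lemma S_diff: "x \<in> Sset \<xi> \<alpha> M R \<Longrightarrow> y \<in> Sset \<xi> \<alpha> M R \<Longrightarrow> \<bar>Psi \<xi> x - Psi \<xi> y\<bar> < 2 * M"
  unfolding Sset_def by auto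

lemma S_R: "x \<in> Sset \<xi> \<alpha> M R \<Longrightarrow> R \<le> \<bar>\<xi>\<bar> + \<bar>x\<bar>"
  unfolding Sset_def by auto

lemma pbound_nonempty:
  assumes "\<And>x0. x0 \<in> T \<Longrightarrow> pbound f T B"
  shows "pbound f T B"
proof (cases "T = {}")
  case True
  then show ?thesis using pbound_empty pbound_le by (metis zero_le)
next
  case False then show ?thesis using assms by blast
qed

context
  fixes \<mu> \<nu> :: real
  assumes mn: "0 < \<mu>" "\<mu> < \<nu>" "\<nu> < 1/2"
begin

lemma Rpow: assumes "0 < R" "0 < c" "c \<le> 1" "c * R \<le> x"
  shows "x powr (\<mu> - \<nu>) \<le> (1/c) * R powr (\<mu> - \<nu>)"
  using neg_pow[of c R x "\<nu> - \<mu>"] assms mn by simp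

lemma pieceA:
  assumes "0 \<le> \<xi>" "1 \<le> M" "0 < R"
  shows "pbound (\<lambda>\<eta>. ennreal (W \<mu> \<nu> \<xi> \<eta>)) (Sset \<xi> \<alpha> M R \<inter> {\<eta>. \<eta> \<noteq> 0 \<and> \<bar>\<eta>\<bar> \<le> \<xi>/2})
           (ennreal (36 * (sqrt M * R powr (\<mu> - \<nu>))))"
proof (rule pbound_nonempty)
  fix x0 assume x0: "x0 \<in> Sset \<xi> \<alpha> M R \<inter> {\<eta>. \<eta> \<noteq> 0 \<and> \<bar>\<eta>\<bar> \<le> \<xi>/2}"
  let ?T = "Sset \<xi> \<alpha> M R \<inter> {\<eta>. \<eta> \<noteq> 0 \<and> \<bar>\<eta>\<bar> \<le> \<xi>/2}"
  have xi: "0 < \<xi>" using x0 by auto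
  have R: "2/3 * R \<le> \<xi>" using S_R[of x0 \<xi> \<alpha> M R] x0 assms by auto
  define d where "d = 4 * M / \<xi>\<^sup>2"
  have d0: "0 < d" using xi assms by (simp add: d_def)
  have sub: "?T \<subseteq> cball x0 d"
  proof
    fix y assume y: "y \<in> ?T"
    have "3/4 * \<bar>x0 - y\<bar> * (3/4 * \<xi>\<^sup>2) \<le> 3/4 * \<bar>x0 - y\<bar> * \<bar>Qf \<xi> x0 y\<bar>"
      using Q_A[of \<xi> x0 y] x0 y assms by (intro mult_left_mono) auto
    also have "\<dots> < 2 * M" using psi_diff[of \<xi> x0 y] S_diff[of x0 \<xi> \<alpha> M R y] x0 y by auto
    finally have "\<bar>x0 - y\<bar> * \<xi>\<^sup>2 \<le> 4 * M" using assms by simp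
    then have "\<bar>x0 - y\<bar> \<le> d" using xi by (simp add: d_def le_divide_eq)
    then show "y \<in> cball x0 d" by (simp add: dist_real_def)
  qed
  have "pbound (\<lambda>\<eta>. ennreal (W \<mu> \<nu> \<xi> \<eta>)) ?T
     (ennreal ((2 * \<xi> * \<xi> powr (\<mu> - \<nu>)) * (2 * (d powr (1 - 1/2) / (1 - 1/2)) + 2 * d * d powr (-(1/2)))))"
  proof (rule pbound_sing[OF sub])
    show "ennreal (W \<mu> \<nu> \<xi> x) \<le> ennreal (2 * \<xi> * \<xi> powr (\<mu> - \<nu>) * \<bar>x - 0\<bar> powr - (1/2))" if "x \<in> ?T" for x
      using WA[OF mn, of \<xi> x] that assms by (intro ennreal_leI) auto
  qed (use xi d0 in auto)
  moreover have "(2 * \<xi> * \<xi> powr (\<mu> - \<nu>)) * (2 * (d powr (1 - 1/2) / (1 - 1/2)) + 2 * d * d powr (-(1/2)))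
      \<le> 36 * (sqrt M * R powr (\<mu> - \<nu>))"
  proof -
    have "2 * (d powr (1 - 1/2) / (1 - 1/2)) + 2 * d * d powr (-(1/2)) = 6 * sqrt d"
      using sing_half[OF d0] by simp
    moreover have "sqrt d = 2 * sqrt M / \<xi>"
      using xi assms by (simp add: d_def real_sqrt_divide real_sqrt_mult)
    ultimately have "(2 * \<xi> * \<xi> powr (\<mu> - \<nu>)) * (2 * (d powr (1 - 1/2) / (1 - 1/2)) + 2 * d * d powr (-(1/2)))
        = (2 * \<xi> * \<xi> powr (\<mu> - \<nu>)) * (6 * (2 * sqrt M / \<xi>))" by simp
    also have "\<dots> = 24 * sqrt M * \<xi> powr (\<mu> - \<nu>)" using xi by (simp add: field_simps)
    also have "\<dots> \<le> 24 * sqrt M * ((1/(2/3)) * R powr (\<mu> - \<nu>))"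
      using Rpow[of R "2/3" \<xi>] R assms by (intro mult_left_mono) auto
    also have "\<dots> = 36 * (sqrt M * R powr (\<mu> - \<nu>))" by simp
    finally show ?thesis .
  qed
  ultimately show "pbound (\<lambda>\<eta>. ennreal (W \<mu> \<nu> \<xi> \<eta>)) ?T (ennreal (36 * (sqrt M * R powr (\<mu> - \<nu>))))"
    using pbound_le ennreal_leI by blast
qed


lemma pieceB:
  assumes "0 \<le> \<xi>" "1 \<le> M" "0 < R"
  shows "pbound (\<lambda>\<eta>. ennreal (W \<mu> \<nu> \<xi> \<eta>)) (Sset \<xi> \<alpha> M R \<inter> {\<eta>. \<eta> < 0 \<and> \<xi>/2 \<le> \<bar>\<eta>\<bar>})
           (ennreal (168 * (sqrt M * R powr (\<mu> - \<nu>))))"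
proof -
  let ?T = "Sset \<xi> \<alpha> M R \<inter> {\<eta>. \<eta> < 0 \<and> \<xi>/2 \<le> \<bar>\<eta>\<bar>}"
  have "pbound (\<lambda>\<eta>. ennreal (W \<mu> \<nu> \<xi> \<eta>)) ?T (ennreal ((12 * R powr (\<mu> - \<nu>)) * 7 * sqrt (3 * M)))"
  proof (rule pbound_grow)
    show "0 < 3 * M" using assms by simp
    show "\<bar>x - y\<bar> * max (x\<^sup>2) (y\<^sup>2) \<le> 3 * M" if "x \<in> ?T" "y \<in> ?T" for x y
    proof -
      have "max (x\<^sup>2) (y\<^sup>2) \<le> Qf \<xi> x y" using Q_B[of \<xi> x y] that assms by auto
      then have "\<bar>x - y\<bar> * max (x\<^sup>2) (y\<^sup>2) \<le> \<bar>x - y\<bar> * \<bar>Qf \<xi> x y\<bar>" by (intro mult_left_mono) auto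
      moreover have "3/4 * \<bar>x - y\<bar> * \<bar>Qf \<xi> x y\<bar> < 2 * M"
        using psi_diff[of \<xi> x y] S_diff[of x \<xi> \<alpha> M R y] that by auto
      ultimately show ?thesis using assms by linarith
    qed
    show "ennreal (W \<mu> \<nu> \<xi> x) \<le> ennreal (12 * R powr (\<mu> - \<nu>) * sqrt \<bar>x\<bar>)" if "x \<in> ?T" for x
    proof (rule ennreal_leI)
      have R: "1/3 * R \<le> \<bar>x\<bar>" using S_R[of x \<xi> \<alpha> M R] that assms by auto
      have "W \<mu> \<nu> \<xi> x \<le> (4 * \<bar>x\<bar> powr (\<mu> - \<nu>)) * sqrt \<bar>x\<bar>" using WB[OF mn, of \<xi> x] that assms by auto
      also have "\<dots> \<le> (4 * ((1/(1/3)) * R powr (\<mu> - \<nu>))) * sqrt \<bar>x\<bar>"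
        using Rpow[of R "1/3" "\<bar>x\<bar>"] R assms by (intro mult_right_mono mult_left_mono) auto
      finally show "W \<mu> \<nu> \<xi> x \<le> 12 * R powr (\<mu> - \<nu>) * sqrt \<bar>x\<bar>" by simp
    qed
  qed simp
  moreover have "(12 * R powr (\<mu> - \<nu>)) * 7 * sqrt (3 * M) \<le> 168 * (sqrt M * R powr (\<mu> - \<nu>))"
  proof -
    have "sqrt 3 \<le> 2" by (rule real_le_lsqrt) auto
    then have "sqrt (3 * M) \<le> 2 * sqrt M" using assms by (simp add: real_sqrt_mult mult_right_mono)
    then have "(12 * R powr (\<mu> - \<nu>)) * 7 * sqrt (3 * M) \<le> (12 * R powr (\<mu> - \<nu>)) * 7 * (2 * sqrt M)"
      by (intro mult_left_mono) auto
    then show ?thesis by (simp add: algebra_simps)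
  qed
  ultimately show ?thesis using pbound_le ennreal_leI by blast
qed

lemma pieceC:
  assumes "0 \<le> \<xi>" "1 \<le> M" "0 < R"
  shows "pbound (\<lambda>\<eta>. ennreal (W \<mu> \<nu> \<xi> \<eta>)) (Sset \<xi> \<alpha> M R \<inter> {\<eta>. 0 < \<eta> \<and> 3 * \<xi> \<le> \<eta>})
           (ennreal (42 * (sqrt M * R powr (\<mu> - \<nu>))))"
proof -
  let ?T = "Sset \<xi> \<alpha> M R \<inter> {\<eta>. 0 < \<eta> \<and> 3 * \<xi> \<le> \<eta>}"
  have "pbound (\<lambda>\<eta>. ennreal (W \<mu> \<nu> \<xi> \<eta>)) ?T (ennreal ((2 * R powr (\<mu> - \<nu>)) * 7 * sqrt (8 * M)))"
  proof (rule pbound_grow)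
    show "0 < 8 * M" using assms by simp
    show "\<bar>x - y\<bar> * max (x\<^sup>2) (y\<^sup>2) \<le> 8 * M" if "x \<in> ?T" "y \<in> ?T" for x y
    proof -
      have "max (x\<^sup>2) (y\<^sup>2) \<le> 3 * Qf \<xi> x y" using Q_C[of \<xi> x y] that assms by auto
      then have "\<bar>x - y\<bar> * max (x\<^sup>2) (y\<^sup>2) \<le> \<bar>x - y\<bar> * (3 * \<bar>Qf \<xi> x y\<bar>)" by (intro mult_left_mono) auto
      moreover have "3/4 * \<bar>x - y\<bar> * \<bar>Qf \<xi> x y\<bar> < 2 * M"
        using psi_diff[of \<xi> x y] S_diff[of x \<xi> \<alpha> M R y] that by auto
      ultimately show ?thesis using assms by linarith
    qed
    show "ennreal (W \<mu> \<nu> \<xi> x) \<le> ennreal (2 * R powr (\<mu> - \<nu>) * sqrt \<bar>x\<bar>)" if "x \<in> ?T" for x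
    proof (rule ennreal_leI)
      have R: "3/4 * R \<le> \<bar>x\<bar>" using S_R[of x \<xi> \<alpha> M R] that assms by auto
      have "W \<mu> \<nu> \<xi> x \<le> (3/2 * \<bar>x\<bar> powr (\<mu> - \<nu>)) * sqrt \<bar>x\<bar>" using WC[OF mn, of \<xi> x] that assms by auto
      also have "\<dots> \<le> (3/2 * ((1/(3/4)) * R powr (\<mu> - \<nu>))) * sqrt \<bar>x\<bar>"
        using Rpow[of R "3/4" "\<bar>x\<bar>"] R assms by (intro mult_right_mono mult_left_mono) auto
      finally show "W \<mu> \<nu> \<xi> x \<le> 2 * R powr (\<mu> - \<nu>) * sqrt \<bar>x\<bar>" by simp
    qed
  qed simp
  moreover have "(2 * R powr (\<mu> - \<nu>)) * 7 * sqrt (8 * M) \<le> 42 * (sqrt M * R powr (\<mu> - \<nu>))"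
  proof -
    have "sqrt 8 \<le> 3" by (rule real_le_lsqrt) auto
    then have "sqrt (8 * M) \<le> 3 * sqrt M" using assms by (simp add: real_sqrt_mult mult_right_mono)
    then have "(2 * R powr (\<mu> - \<nu>)) * 7 * sqrt (8 * M) \<le> (2 * R powr (\<mu> - \<nu>)) * 7 * (3 * sqrt M)"
      by (intro mult_left_mono) auto
    then show ?thesis by (simp add: algebra_simps)
  qed
  ultimately show ?thesis using pbound_le ennreal_leI by blast
qed

lemma pieceE13:
  assumes "0 \<le> \<xi>" "1 \<le> M" "0 < R" "\<xi>/2 \<le> lo" "hi \<le> 3 * \<xi>"
    "\<And>\<eta>. lo \<le> \<eta> \<Longrightarrow> \<eta> \<le> hi \<Longrightarrow> \<xi>/6 \<le> \<bar>\<xi> - \<eta>\<bar>"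
    "\<And>x y. lo \<le> x \<Longrightarrow> x \<le> hi \<Longrightarrow> lo \<le> y \<Longrightarrow> y \<le> hi \<Longrightarrow> 3/4 * \<xi> * (x - y)\<^sup>2 \<le> \<bar>Psi \<xi> x - Psi \<xi> y\<bar>"
  shows "pbound (\<lambda>\<eta>. ennreal (W \<mu> \<nu> \<xi> \<eta>)) (Sset \<xi> \<alpha> M R \<inter> {\<eta>. \<eta> \<noteq> 0 \<and> lo \<le> \<eta> \<and> \<eta> \<le> hi})
           (ennreal (400 * (sqrt M * R powr (\<mu> - \<nu>))))"
proof (rule pbound_nonempty)
  let ?T = "Sset \<xi> \<alpha> M R \<inter> {\<eta>. \<eta> \<noteq> 0 \<and> lo \<le> \<eta> \<and> \<eta> \<le> hi}"
  fix x0 assume x0: "x0 \<in> ?T"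
  have xi: "0 < \<xi>" using x0 assms by auto
  have R: "1/4 * R \<le> \<xi>" using S_R[of x0 \<xi> \<alpha> M R] x0 assms by auto
  define d where "d = sqrt (3 * M / \<xi>)"
  have sub: "?T \<subseteq> cball x0 d"
  proof
    fix y assume y: "y \<in> ?T"
    have "3/4 * \<xi> * (x0 - y)\<^sup>2 < 2 * M"
      using assms(7)[of x0 y] S_diff[of x0 \<xi> \<alpha> M R y] x0 y by auto
    then have "(x0 - y)\<^sup>2 \<le> 3 * M / \<xi>" using xi assms by (simp add: le_divide_eq algebra_simps)
    then have "\<bar>x0 - y\<bar> \<le> d" unfolding d_def by (simp add: real_le_rsqrt)
    then show "y \<in> cball x0 d" by (simp add: dist_real_def)
  qed
  have "pbound (\<lambda>\<eta>. ennreal (W \<mu> \<nu> \<xi> \<eta>)) ?T (ennreal (2 * (104 * sqrt \<xi> * R powr (\<mu> - \<nu>)) * d))"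
  proof (rule pbound_const[OF sub])
    show "ennreal (W \<mu> \<nu> \<xi> x) \<le> ennreal (104 * sqrt \<xi> * R powr (\<mu> - \<nu>))" if "x \<in> ?T" for x
    proof (rule ennreal_leI)
      have "W \<mu> \<nu> \<xi> x \<le> 26 * sqrt \<xi> * \<xi> powr (\<mu> - \<nu>)"
        using WE13[OF mn, of \<xi> x] that assms xi by auto
      also have "\<dots> \<le> 26 * sqrt \<xi> * ((1/(1/4)) * R powr (\<mu> - \<nu>))"
        using Rpow[of R "1/4" \<xi>] R assms by (intro mult_left_mono) auto
      finally show "W \<mu> \<nu> \<xi> x \<le> 104 * sqrt \<xi> * R powr (\<mu> - \<nu>)" by simp
    qed
  qed (use d_def xi assms in auto)
  moreover have "2 * (104 * sqrt \<xi> * R powr (\<mu> - \<nu>)) * d \<le> 400 * (sqrt M * R powr (\<mu> - \<nu>))"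
  proof -
    have "sqrt \<xi> * d = sqrt 3 * sqrt M"
      using xi assms by (simp add: d_def real_sqrt_divide real_sqrt_mult)
    moreover have "sqrt 3 \<le> 25/13" by (rule real_le_lsqrt) (auto simp: power2_eq_square)
    ultimately have "2 * 104 * (sqrt \<xi> * d) \<le> 400 * sqrt M"
      using assms by (simp add: mult_right_mono)
    then have "2 * 104 * (sqrt \<xi> * d) * R powr (\<mu> - \<nu>) \<le> 400 * sqrt M * R powr (\<mu> - \<nu>)"
      by (intro mult_right_mono) auto
    then show ?thesis by (simp add: algebra_simps)
  qed
  ultimately show "pbound (\<lambda>\<eta>. ennreal (W \<mu> \<nu> \<xi> \<eta>)) ?T (ennreal (400 * (sqrt M * R powr (\<mu> - \<nu>))))"
    using pbound_le ennreal_leI by blast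
qed


lemma pieceE2:
  assumes "1 \<le> \<xi>" "1 \<le> M" "0 < R"
  shows "pbound (\<lambda>\<eta>. ennreal (W \<mu> \<nu> \<xi> \<eta>)) (Sset \<xi> \<alpha> M R \<inter> {\<eta>. 5*\<xi>/6 \<le> \<eta> \<and> \<eta> \<le> 3*\<xi>/2 \<and> \<eta> \<noteq> \<xi>})
           (ennreal (400 * (sqrt M * R powr (\<mu> - \<nu>))))"
proof (rule pbound_nonempty)
  let ?T = "Sset \<xi> \<alpha> M R \<inter> {\<eta>. 5*\<xi>/6 \<le> \<eta> \<and> \<eta> \<le> 3*\<xi>/2 \<and> \<eta> \<noteq> \<xi>}"
  fix x0 assume x0: "x0 \<in> ?T"
  have xi: "0 < \<xi>" using assms by auto
  have R: "2/5 * R \<le> \<xi>" using S_R[of x0 \<xi> \<alpha> M R] x0 assms by auto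
  define d where "d = 6 * M / \<xi>\<^sup>2"
  have d0: "0 < d" using xi assms by (simp add: d_def)
  define m where "m = min d (\<xi>/2)"
  define c where "c = (if d \<le> \<xi>/2 then x0 else \<xi>)"
  have m0: "0 < m" using d0 xi by (simp add: m_def)
  have near: "\<bar>x0 - y\<bar> \<le> d" if y: "y \<in> ?T" for y
  proof -
    have h: "5*\<xi>/6 \<le> x0" "x0 \<le> 3*\<xi>/2" "5*\<xi>/6 \<le> y" "y \<le> 3*\<xi>/2" using x0 y by auto
    have "\<xi>\<^sup>2/2 \<le> - Qf \<xi> x0 y" by (rule Q_E2) (use h xi in auto)
    then have "\<xi>\<^sup>2/2 \<le> \<bar>Qf \<xi> x0 y\<bar>" by linarith
    then have "3/4 * \<bar>x0 - y\<bar> * (\<xi>\<^sup>2/2) \<le> 3/4 * \<bar>x0 - y\<bar> * \<bar>Qf \<xi> x0 y\<bar>"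
      by (intro mult_left_mono) auto
    also have "\<dots> < 2 * M" using psi_diff[of \<xi> x0 y] S_diff[of x0 \<xi> \<alpha> M R y] x0 y by auto
    finally have "\<bar>x0 - y\<bar> * \<xi>\<^sup>2 \<le> 6 * M" using assms by simp
    then show "\<bar>x0 - y\<bar> \<le> d" using xi by (simp add: d_def le_divide_eq)
  qed
  have sub: "?T \<subseteq> cball c m"
  proof
    fix y assume y: "y \<in> ?T"
    show "y \<in> cball c m"
    proof (cases "d \<le> \<xi>/2")
      case True then show ?thesis using near[OF y] by (simp add: c_def m_def dist_real_def)
    next
      case False
      have h: "5*\<xi>/6 \<le> y" "y \<le> 3*\<xi>/2" using y by auto
      then have "\<bar>\<xi> - y\<bar> \<le> \<xi>/2" using xi unfolding abs_le_iff by linarith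
      then show ?thesis using False by (simp add: c_def m_def dist_real_def)
    qed
  qed
  have "pbound (\<lambda>\<eta>. ennreal (W \<mu> \<nu> \<xi> \<eta>)) ?T
     (ennreal ((6 * sqrt \<xi> * \<xi> powr \<mu>) * (2 * (m powr (1 - \<nu>) / (1 - \<nu>)) + 2 * m * m powr (-\<nu>))))"
  proof (rule pbound_sing[OF sub])
    show "ennreal (W \<mu> \<nu> \<xi> x) \<le> ennreal (6 * sqrt \<xi> * \<xi> powr \<mu> * \<bar>x - \<xi>\<bar> powr - \<nu>)" if "x \<in> ?T" for x
      using WE2[OF mn, of \<xi> x] that assms by (intro ennreal_leI) auto
  qed (use m0 mn xi in auto)
  moreover have "(6 * sqrt \<xi> * \<xi> powr \<mu>) * (2 * (m powr (1 - \<nu>) / (1 - \<nu>)) + 2 * m * m powr (-\<nu>))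
      \<le> 400 * (sqrt M * R powr (\<mu> - \<nu>))"
  proof -
    have mm: "m * m powr (-\<nu>) = m powr (1 - \<nu>)"
    proof -
      have "m powr (1 - \<nu>) = m powr (1 + (-\<nu>))" by simp
      also have "\<dots> = m powr 1 * m powr (-\<nu>)" by (rule powr_add)
      also have "\<dots> = m * m powr (-\<nu>)" using m0 by simp
      finally show ?thesis by simp
    qed
    have q: "2 * (m powr (1 - \<nu>) / (1 - \<nu>)) \<le> 4 * m powr (1 - \<nu>)"
    proof -
      have "1 / (1 - \<nu>) \<le> 2" using mn by (simp add: divide_le_eq)
      then have "m powr (1 - \<nu>) * (1 / (1 - \<nu>)) \<le> m powr (1 - \<nu>) * 2" by (intro mult_left_mono) auto
      then show ?thesis by simp
    qed
    have mp: "m powr (1 - \<nu>) \<le> sqrt d * \<xi> powr (1/2 - \<nu>)"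
    proof -
      have "m powr (1 - \<nu>) = m powr (1/2) * m powr (1/2 - \<nu>)" by (simp add: powr_add[symmetric])
      also have "\<dots> \<le> d powr (1/2) * \<xi> powr (1/2 - \<nu>)"
      proof (rule mult_mono)
        show "m powr (1/2) \<le> d powr (1/2)" using m0 by (intro powr_mono2) (auto simp: m_def)
        have "m powr (1/2 - \<nu>) \<le> (\<xi>/2) powr (1/2 - \<nu>)" using m0 mn by (intro powr_mono2) (auto simp: m_def)
        also have "\<dots> \<le> \<xi> powr (1/2 - \<nu>)" using xi mn by (intro powr_mono2) auto
        finally show "m powr (1/2 - \<nu>) \<le> \<xi> powr (1/2 - \<nu>)" .
      qed auto
      also have "d powr (1/2) = sqrt d" using d0 by (simp add: powr_half_sqrt)
      finally show ?thesis .
    qed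
    have sd: "sqrt d = sqrt 6 * sqrt M / \<xi>" using xi assms by (simp add: d_def real_sqrt_divide real_sqrt_mult)
    have xe: "sqrt \<xi> * \<xi> powr \<mu> * \<xi> powr (1/2 - \<nu>) / \<xi> = \<xi> powr (\<mu> - \<nu>)"
    proof -
      have "sqrt \<xi> * \<xi> powr \<mu> * \<xi> powr (1/2 - \<nu>) = \<xi> powr (1/2) * \<xi> powr \<mu> * \<xi> powr (1/2 - \<nu>)"
        using xi by (simp add: powr_half_sqrt)
      also have "\<dots> = \<xi> powr (1 + (\<mu> - \<nu>))" by (simp add: powr_add[symmetric])
      also have "\<dots> = \<xi> * \<xi> powr (\<mu> - \<nu>)" using xi by (simp add: powr_add)
      finally show ?thesis using xi by simp
    qed
    have K0: "0 \<le> 6 * sqrt \<xi> * \<xi> powr \<mu>" using xi by simp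
    have "(6 * sqrt \<xi> * \<xi> powr \<mu>) * (2 * (m powr (1 - \<nu>) / (1 - \<nu>)) + 2 * m * m powr (-\<nu>))
        \<le> (6 * sqrt \<xi> * \<xi> powr \<mu>) * (6 * m powr (1 - \<nu>))"
      using q mm K0 by (intro mult_left_mono) (auto simp: mult.assoc)
    also have "\<dots> \<le> (6 * sqrt \<xi> * \<xi> powr \<mu>) * (6 * (sqrt d * \<xi> powr (1/2 - \<nu>)))"
      using mp K0 by (intro mult_left_mono) auto
    also have "\<dots> = 36 * sqrt 6 * sqrt M * (sqrt \<xi> * \<xi> powr \<mu> * \<xi> powr (1/2 - \<nu>) / \<xi>)"
      unfolding sd by (simp add: field_simps)
    also have "\<dots> = 36 * sqrt 6 * sqrt M * \<xi> powr (\<mu> - \<nu>)" unfolding xe ..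
    also have "\<dots> \<le> 36 * sqrt 6 * sqrt M * ((1/(2/5)) * R powr (\<mu> - \<nu>))"
      using Rpow[of R "2/5" \<xi>] R assms by (intro mult_left_mono) auto
    also have "\<dots> \<le> 400 * (sqrt M * R powr (\<mu> - \<nu>))"
    proof -
      have "sqrt 6 \<le> 5/2" by (rule real_le_lsqrt) (auto simp: power2_eq_square)
      then have "36 * sqrt 6 * (1/(2/5)) \<le> 400" by simp
      then have "36 * sqrt 6 * (1/(2/5)) * (sqrt M * R powr (\<mu> - \<nu>)) \<le> 400 * (sqrt M * R powr (\<mu> - \<nu>))"
        using assms by (intro mult_right_mono) auto
      then show ?thesis by (simp add: algebra_simps)
    qed
    finally show ?thesis .
  qed
  ultimately show "pbound (\<lambda>\<eta>. ennreal (W \<mu> \<nu> \<xi> \<eta>)) ?T (ennreal (400 * (sqrt M * R powr (\<mu> - \<nu>))))"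
    using pbound_le ennreal_leI by blast
qed

lemma pieceSlow:
  assumes "0 \<le> \<xi>" "\<xi> < 1" "1 \<le> M" "0 < R"
  shows "pbound (\<lambda>\<eta>. ennreal (W \<mu> \<nu> \<xi> \<eta>)) (Sset \<xi> \<alpha> M R \<inter> {\<eta>. \<eta> \<noteq> 0 \<and> 5*\<xi>/6 \<le> \<eta> \<and> \<eta> \<le> 3*\<xi>/2})
           (ennreal (23 * (sqrt M * R powr (\<mu> - \<nu>))))"
proof (rule pbound_nonempty)
  let ?T = "Sset \<xi> \<alpha> M R \<inter> {\<eta>. \<eta> \<noteq> 0 \<and> 5*\<xi>/6 \<le> \<eta> \<and> \<eta> \<le> 3*\<xi>/2}"
  fix x0 assume x0: "x0 \<in> ?T"
  have xi: "0 < \<xi>" using x0 assms by auto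
  have R: "R \<le> 5/2" using S_R[of x0 \<xi> \<alpha> M R] x0 assms by auto
  have "pbound (\<lambda>\<eta>. ennreal (W \<mu> \<nu> \<xi> \<eta>)) ?T (ennreal (2 * 9 * (\<xi>/2)))"
  proof (rule pbound_const)
    show "?T \<subseteq> cball \<xi> (\<xi>/2)"
    proof
      fix y assume y: "y \<in> ?T"
      have h: "5*\<xi>/6 \<le> y" "y \<le> 3*\<xi>/2" using y by auto
      then have "\<bar>\<xi> - y\<bar> \<le> \<xi>/2" using xi unfolding abs_le_iff by linarith
      then show "y \<in> cball \<xi> (\<xi>/2)" by (simp add: dist_real_def)
    qed
    show "ennreal (W \<mu> \<nu> \<xi> x) \<le> ennreal 9" if "x \<in> ?T" for x
      using WEslow[OF mn, of \<xi> x] that assms xi by (intro ennreal_leI) auto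
  qed (use xi in auto)
  moreover have "2 * 9 * (\<xi>/2) \<le> 23 * (sqrt M * R powr (\<mu> - \<nu>))"
  proof -
    have "(5/2) powr (\<mu> - \<nu>) \<le> R powr (\<mu> - \<nu>)" using R assms mn by (intro powr_mono2') auto
    moreover have "(5/2::real) powr (-1) \<le> (5/2) powr (\<mu> - \<nu>)" using mn by (intro powr_mono) auto
    ultimately have "2/5 \<le> R powr (\<mu> - \<nu>)" by (simp add: powr_minus_divide)
    moreover have "1 \<le> sqrt M" using assms by simp
    ultimately have "1 * (2/5) \<le> sqrt M * R powr (\<mu> - \<nu>)"
      by (intro mult_mono) auto
    then show ?thesis using assms by linarith
  qed
  ultimately show "pbound (\<lambda>\<eta>. ennreal (W \<mu> \<nu> \<xi> \<eta>)) ?T (ennreal (23 * (sqrt M * R powr (\<mu> - \<nu>))))"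
    using pbound_le ennreal_leI by blast
qed

end

lemma pbound_reflect:
  assumes "pbound f T B"
  shows "pbound (\<lambda>x. f (-x)) (uminus ` T) B"
proof -
  obtain g where g: "g \<in> borel_measurable borel" "\<forall>x. f x * indicator T x \<le> g x" "integral\<^sup>N lborel g \<le> B"
    using assms unfolding pbound_def by blast
  show ?thesis unfolding pbound_def
  proof (intro exI[of _ "\<lambda>x. g (-x)"] conjI allI)
    show "(\<lambda>x. g (-x)) \<in> borel_measurable borel" using g(1) by measurable
    show "f (-x) * indicator (uminus ` T) x \<le> g (-x)" for x
    proof -
      have "indicator (uminus ` T) x = (indicator T (-x) :: ennreal)"
        by (auto simp: indicator_def image_iff intro: bexI[of _ "-x"])
      then show ?thesis using g(2) by simp
    qed
    have "integral\<^sup>N lborel g = (\<integral>\<^sup>+x. g (0 + (-1) * x) \<partial>lborel)"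
      using nn_integral_real_affine[OF g(1), of "-1" 0] by simp
    then show "(\<integral>\<^sup>+x. g (-x) \<partial>lborel) \<le> B" using g(3) by simp
  qed
qed

lemma Psi_minus: "Psi (-\<xi>) (-\<eta>) = - Psi \<xi> \<eta>"
  unfolding Psi_def by (simp add: power2_eq_square algebra_simps)

lemma dpsi_from_Q: assumes "0 \<le> \<xi>" "\<xi> * \<bar>x - y\<bar> \<le> \<bar>Qf \<xi> x y\<bar>"
  shows "3/4 * \<xi> * (x - y)\<^sup>2 \<le> \<bar>Psi \<xi> x - Psi \<xi> y\<bar>"
proof -
  have "3/4 * \<xi> * (x - y)\<^sup>2 = 3/4 * \<bar>x - y\<bar> * (\<xi> * \<bar>x - y\<bar>)" by (simp add: power2_eq_square abs_mult_self algebra_simps)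
  also have "\<dots> \<le> 3/4 * \<bar>x - y\<bar> * \<bar>Qf \<xi> x y\<bar>" using assms by (intro mult_left_mono) auto
  also have "\<dots> = \<bar>Psi \<xi> x - Psi \<xi> y\<bar>" using psi_diff by simp
  finally show ?thesis .
qed

context
  fixes \<mu> \<nu> :: real
  assumes mn: "0 < \<mu>" "\<mu> < \<nu>" "\<nu> < 1/2"
begin

lemma main_pos:
  assumes "0 \<le> \<xi>" "1 \<le> M" "0 < R"
  shows "pbound (\<lambda>\<eta>. ennreal (W \<mu> \<nu> \<xi> \<eta>)) (Sset \<xi> \<alpha> M R) (ennreal (2300 * (sqrt M * R powr (\<mu> - \<nu>))))"
proof -
  let ?f = "\<lambda>\<eta>. ennreal (W \<mu> \<nu> \<xi> \<eta>)"
  let ?S = "Sset \<xi> \<alpha> M R"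
  define B0 where "B0 = sqrt M * R powr (\<mu> - \<nu>)"
  have B0: "0 \<le> B0" using assms by (simp add: B0_def)
  have e1a: "pbound ?f (?S \<inter> {\<eta>. \<eta> \<noteq> 0 \<and> \<xi>/2 \<le> \<eta> \<and> \<eta> \<le> 2*\<xi>/3}) (ennreal (400 * B0))"
    unfolding B0_def
  proof (rule pieceE13[OF mn assms])
    show "3/4 * \<xi> * (x - y)\<^sup>2 \<le> \<bar>Psi \<xi> x - Psi \<xi> y\<bar>"
      if "\<xi>/2 \<le> x" "x \<le> 2*\<xi>/3" "\<xi>/2 \<le> y" "y \<le> 2*\<xi>/3" for x y
    proof (rule dpsi_from_Q[OF assms(1)])
      have "2*\<xi>*\<bar>x-y\<bar> \<le> Qf \<xi> x y" by (rule Q_E1) (use that assms in auto)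
      moreover have "0 \<le> \<xi>*\<bar>x-y\<bar>" using assms by simp
      ultimately show "\<xi> * \<bar>x - y\<bar> \<le> \<bar>Qf \<xi> x y\<bar>" by linarith
    qed
  qed (use assms in auto)
  have e1b: "pbound ?f (?S \<inter> {\<eta>. \<eta> \<noteq> 0 \<and> 2*\<xi>/3 \<le> \<eta> \<and> \<eta> \<le> 5*\<xi>/6}) (ennreal (400 * B0))"
    unfolding B0_def
  proof (rule pieceE13[OF mn assms])
    show "3/4 * \<xi> * (x - y)\<^sup>2 \<le> \<bar>Psi \<xi> x - Psi \<xi> y\<bar>"
      if "2*\<xi>/3 \<le> x" "x \<le> 5*\<xi>/6" "2*\<xi>/3 \<le> y" "y \<le> 5*\<xi>/6" for x y
    proof (rule dpsi_from_Q[OF assms(1)])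
      have "5/3*\<xi>*\<bar>x-y\<bar> \<le> - Qf \<xi> x y" by (rule Q_E1') (use that assms in auto)
      moreover have "0 \<le> \<xi>*\<bar>x-y\<bar>" using assms by simp
      ultimately show "\<xi> * \<bar>x - y\<bar> \<le> \<bar>Qf \<xi> x y\<bar>" by linarith
    qed
  qed (use assms in auto)
  have e3a: "pbound ?f (?S \<inter> {\<eta>. \<eta> \<noteq> 0 \<and> 3*\<xi>/2 \<le> \<eta> \<and> \<eta> \<le> 2*\<xi>}) (ennreal (400 * B0))"
    unfolding B0_def
  proof (rule pieceE13[OF mn assms])
    show "3/4 * \<xi> * (x - y)\<^sup>2 \<le> \<bar>Psi \<xi> x - Psi \<xi> y\<bar>"
      if "3*\<xi>/2 \<le> x" "x \<le> 2*\<xi>" "3*\<xi>/2 \<le> y" "y \<le> 2*\<xi>" for x y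
    proof (rule dpsi_from_Q[OF assms(1)])
      have "\<xi>*\<bar>x-y\<bar> \<le> - Qf \<xi> x y" by (rule Q_E3) (use that assms in auto)
      then show "\<xi> * \<bar>x - y\<bar> \<le> \<bar>Qf \<xi> x y\<bar>" by linarith
    qed
  qed (use assms in auto)
  have e3b: "pbound ?f (?S \<inter> {\<eta>. \<eta> \<noteq> 0 \<and> 2*\<xi> \<le> \<eta> \<and> \<eta> \<le> 3*\<xi>}) (ennreal (400 * B0))"
    unfolding B0_def
  proof (rule pieceE13[OF mn assms])
    show "3/4 * \<xi> * (x - y)\<^sup>2 \<le> \<bar>Psi \<xi> x - Psi \<xi> y\<bar>"
      if "2*\<xi> \<le> x" "x \<le> 3*\<xi>" "2*\<xi> \<le> y" "y \<le> 3*\<xi>" for x y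
    proof (rule dpsi_from_Q[OF assms(1)])
      have "2*\<xi>*\<bar>x-y\<bar> \<le> Qf \<xi> x y" by (rule Q_E3') (use that assms in auto)
      moreover have "0 \<le> \<xi>*\<bar>x-y\<bar>" using assms by simp
      ultimately show "\<xi> * \<bar>x - y\<bar> \<le> \<bar>Qf \<xi> x y\<bar>" by linarith
    qed
  qed (use assms in auto)
  have pa: "pbound ?f (?S \<inter> {\<eta>. \<eta> \<noteq> 0 \<and> \<bar>\<eta>\<bar> \<le> \<xi>/2}) (ennreal (36 * B0))"
    unfolding B0_def by (rule pieceA[OF mn assms])
  have pb: "pbound ?f (?S \<inter> {\<eta>. \<eta> < 0 \<and> \<xi>/2 \<le> \<bar>\<eta>\<bar>}) (ennreal (168 * B0))"
    unfolding B0_def by (rule pieceB[OF mn assms])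
  have pc: "pbound ?f (?S \<inter> {\<eta>. 0 < \<eta> \<and> 3 * \<xi> \<le> \<eta>}) (ennreal (42 * B0))"
    unfolding B0_def by (rule pieceC[OF mn assms])
  have pe2: "pbound ?f (?S \<inter> {\<eta>. 1 \<le> \<xi> \<and> 5*\<xi>/6 \<le> \<eta> \<and> \<eta> \<le> 3*\<xi>/2 \<and> \<eta> \<noteq> \<xi>}) (ennreal (400 * B0))"
  proof (cases "1 \<le> \<xi>")
    case True
    then show ?thesis unfolding B0_def using pieceE2[OF mn True assms(2,3), of \<alpha>] by simp
  next
    case False
    then have "?S \<inter> {\<eta>. 1 \<le> \<xi> \<and> 5*\<xi>/6 \<le> \<eta> \<and> \<eta> \<le> 3*\<xi>/2 \<and> \<eta> \<noteq> \<xi>} = {}" by auto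
    then show ?thesis using pbound_le[OF pbound_empty[of ?f] zero_le] by simp
  qed
  have ps: "pbound ?f (?S \<inter> {\<eta>. \<xi> < 1 \<and> \<eta> \<noteq> 0 \<and> 5*\<xi>/6 \<le> \<eta> \<and> \<eta> \<le> 3*\<xi>/2}) (ennreal (23 * B0))"
  proof (cases "\<xi> < 1")
    case True
    then show ?thesis unfolding B0_def using pieceSlow[OF mn assms(1) True assms(2,3), of \<alpha>] by simp
  next
    case False
    then have "?S \<inter> {\<eta>. \<xi> < 1 \<and> \<eta> \<noteq> 0 \<and> 5*\<xi>/6 \<le> \<eta> \<and> \<eta> \<le> 3*\<xi>/2} = {}" by auto
    then show ?thesis using pbound_le[OF pbound_empty[of ?f] zero_le] by simp
  qed
  have p0: "pbound ?f {0} 0" by (rule pbound_point)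
  have pxi: "pbound ?f {\<xi>} 0" by (rule pbound_point)
  let ?U = "{0} \<union> {\<xi>} \<union> (?S \<inter> {\<eta>. \<eta> \<noteq> 0 \<and> \<bar>\<eta>\<bar> \<le> \<xi>/2}) \<union> (?S \<inter> {\<eta>. \<eta> < 0 \<and> \<xi>/2 \<le> \<bar>\<eta>\<bar>})
     \<union> (?S \<inter> {\<eta>. 0 < \<eta> \<and> 3 * \<xi> \<le> \<eta>}) \<union> (?S \<inter> {\<eta>. \<eta> \<noteq> 0 \<and> \<xi>/2 \<le> \<eta> \<and> \<eta> \<le> 2*\<xi>/3})
     \<union> (?S \<inter> {\<eta>. \<eta> \<noteq> 0 \<and> 2*\<xi>/3 \<le> \<eta> \<and> \<eta> \<le> 5*\<xi>/6})
     \<union> (?S \<inter> {\<eta>. 1 \<le> \<xi> \<and> 5*\<xi>/6 \<le> \<eta> \<and> \<eta> \<le> 3*\<xi>/2 \<and> \<eta> \<noteq> \<xi>})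
     \<union> (?S \<inter> {\<eta>. \<xi> < 1 \<and> \<eta> \<noteq> 0 \<and> 5*\<xi>/6 \<le> \<eta> \<and> \<eta> \<le> 3*\<xi>/2})
     \<union> (?S \<inter> {\<eta>. \<eta> \<noteq> 0 \<and> 3*\<xi>/2 \<le> \<eta> \<and> \<eta> \<le> 2*\<xi>})
     \<union> (?S \<inter> {\<eta>. \<eta> \<noteq> 0 \<and> 2*\<xi> \<le> \<eta> \<and> \<eta> \<le> 3*\<xi>})"
  have pU: "pbound ?f ?U (0 + 0 + ennreal (36 * B0) + ennreal (168 * B0) + ennreal (42 * B0) + ennreal (400 * B0)
      + ennreal (400 * B0) + ennreal (400 * B0) + ennreal (23 * B0) + ennreal (400 * B0) + ennreal (400 * B0))"
    by (intro pbound_union p0 pxi pa pb pc e1a e1b pe2 ps e3a e3b)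
  have cover: "?S \<subseteq> ?U"
  proof
    fix x assume x: "x \<in> ?S"
    show "x \<in> ?U"
    proof (cases "x = 0 \<or> x = \<xi>")
      case True then show ?thesis by blast
    next
      case F1: False
      show ?thesis
      proof (cases "x < 0")
        case True
        then show ?thesis using x F1 by (cases "\<bar>x\<bar> \<le> \<xi>/2") auto
      next
        case F2: False
        then have xp: "0 < x" using F1 by auto
        show ?thesis
        proof (cases "x \<le> \<xi>/2")
          case True then show ?thesis using x xp by simp
        next
          case F3: False
          show ?thesis
          proof (cases "3 * \<xi> \<le> x")
            case True then show ?thesis using x xp by simp
          next
            case F4: False
            show ?thesis
            proof (cases "x \<le> 2*\<xi>/3")
              case True then show ?thesis using x xp F3 by simp
            next
              case F5: False
              show ?thesis
              proof (cases "x \<le> 5*\<xi>/6")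
                case True then show ?thesis using x xp F5 by simp
              next
                case F6: False
                show ?thesis
                proof (cases "x \<le> 3*\<xi>/2")
                  case True then show ?thesis using x xp F6 F1 by (cases "1 \<le> \<xi>") simp_all
                next
                  case F7: False
                  show ?thesis
                  proof (cases "x \<le> 2*\<xi>")
                    case True then show ?thesis using x xp F7 by simp
                  next
                    case False then show ?thesis using x xp F4 by simp
                  qed
                qed
              qed
            qed
          qed
        qed
      qed
    qed
  qed
  have pS: "pbound ?f ?S (0 + 0 + ennreal (36 * B0) + ennreal (168 * B0) + ennreal (42 * B0) + ennreal (400 * B0)
      + ennreal (400 * B0) + ennreal (400 * B0) + ennreal (23 * B0) + ennreal (400 * B0) + ennreal (400 * B0))"
    using pbound_subset[OF pU cover] .
  have sumeq: "0 + 0 + ennreal (36 * B0) + ennreal (168 * B0) + ennreal (42 * B0) + ennreal (400 * B0)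
      + ennreal (400 * B0) + ennreal (400 * B0) + ennreal (23 * B0) + ennreal (400 * B0) + ennreal (400 * B0)
      = ennreal (2269 * B0)"
    using B0 by (simp add: ennreal_plus[symmetric] del: ennreal_plus)
  have le: "ennreal (2269 * B0) \<le> ennreal (2300 * B0)" using B0 by (intro ennreal_leI) auto
  have "pbound ?f ?S (ennreal (2300 * B0))"
    by (rule pbound_le[OF pS]) (simp only: sumeq le)
  then show ?thesis unfolding B0_def .
qed

end

lemma refl_set: "uminus ` Sset (-\<xi>) (-\<alpha>) M R = Sset \<xi> \<alpha> M R"
proof -
  have "x \<in> uminus ` Sset (-\<xi>) (-\<alpha>) M R \<longleftrightarrow> -x \<in> Sset (-\<xi>) (-\<alpha>) M R" for x
    by (auto simp: image_iff intro: bexI[of _ "-x"])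
  moreover have "-x \<in> Sset (-\<xi>) (-\<alpha>) M R \<longleftrightarrow> x \<in> Sset \<xi> \<alpha> M R" for x
  proof -
    have "\<bar>Psi (-\<xi>) (-x) - (-\<alpha>)\<bar> = \<bar>Psi \<xi> x - \<alpha>\<bar>" by (simp add: Psi_minus abs_minus_commute)
    then show ?thesis by (simp add: Sset_def)
  qed
  ultimately show ?thesis by blast
qed

theorem proposition3p10:
  fixes \<mu> \<nu> :: real
  assumes "0 < \<mu>" and "\<mu> < \<nu>" and "\<nu> < 1/2"
  shows "\<exists>C>0. \<forall>\<tau> M \<xi> \<alpha>. 0 < \<tau> \<longrightarrow> \<tau> < 1 \<longrightarrow> 1 \<le> M \<longrightarrow>
    (\<integral>\<^sup>+ \<eta>\<in>{\<eta>. (\<xi>, \<eta>) \<in> Dreg \<tau> \<and> \<bar>Psi \<xi> \<eta> - \<alpha>\<bar> < M}.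
        ennreal (max \<bar>\<xi>\<bar> \<bar>\<eta>\<bar> * jb \<xi> powr \<mu> / (sqrt \<bar>\<eta>\<bar> * jb (\<xi> - \<eta>) powr \<nu>)) \<partial>lborel)
    \<le> ennreal (C * sqrt M * \<tau> powr ((\<nu> - \<mu>) / 3))"
proof (intro exI[of _ 23000] conjI allI impI)
  note mn = assms
  fix \<tau> M \<xi> \<alpha> :: real
  assume t0: "0 < \<tau>" and t1: "\<tau> < 1" and M1: "1 \<le> M"
  define R where "R = \<tau> powr (-1/3) / 10"
  have R0: "0 < R" using t0 by (simp add: R_def)
  have setq: "{\<eta>. (\<xi>, \<eta>) \<in> Dreg \<tau> \<and> \<bar>Psi \<xi> \<eta> - \<alpha>\<bar> < M} = Sset \<xi> \<alpha> M R"
    by (auto simp: Dreg_def Sset_def R_def)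
  have funq: "(\<lambda>\<eta>. ennreal (max \<bar>\<xi>\<bar> \<bar>\<eta>\<bar> * jb \<xi> powr \<mu> / (sqrt \<bar>\<eta>\<bar> * jb (\<xi> - \<eta>) powr \<nu>)))
      = (\<lambda>\<eta>. ennreal (W \<mu> \<nu> \<xi> \<eta>))" by (simp add: W_def)
  have pb: "pbound (\<lambda>\<eta>. ennreal (W \<mu> \<nu> \<xi> \<eta>)) (Sset \<xi> \<alpha> M R) (ennreal (2300 * (sqrt M * R powr (\<mu> - \<nu>))))"
  proof (cases "0 \<le> \<xi>")
    case True
    show ?thesis by (rule main_pos[OF mn True M1 R0])
  next
    case False
    have "pbound (\<lambda>\<eta>. ennreal (W \<mu> \<nu> (-\<xi>) \<eta>)) (Sset (-\<xi>) (-\<alpha>) M R) (ennreal (2300 * (sqrt M * R powr (\<mu> - \<nu>))))"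
      using False by (intro main_pos[OF mn _ M1 R0]) auto
    from pbound_reflect[OF this] show ?thesis by (simp add: W_minus refl_set)
  qed
  have "(\<integral>\<^sup>+ \<eta>\<in>{\<eta>. (\<xi>, \<eta>) \<in> Dreg \<tau> \<and> \<bar>Psi \<xi> \<eta> - \<alpha>\<bar> < M}.
        ennreal (max \<bar>\<xi>\<bar> \<bar>\<eta>\<bar> * jb \<xi> powr \<mu> / (sqrt \<bar>\<eta>\<bar> * jb (\<xi> - \<eta>) powr \<nu>)) \<partial>lborel)
      = (\<integral>\<^sup>+ \<eta>\<in>Sset \<xi> \<alpha> M R. ennreal (W \<mu> \<nu> \<xi> \<eta>) \<partial>lborel)"
    unfolding setq by (simp add: W_def)
  also have "\<dots> \<le> ennreal (2300 * (sqrt M * R powr (\<mu> - \<nu>)))" by (rule pbound_final[OF pb])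
  also have "\<dots> \<le> ennreal (23000 * sqrt M * \<tau> powr ((\<nu> - \<mu>) / 3))"
  proof (rule ennreal_leI)
    have "R powr (\<mu> - \<nu>) = (\<tau> powr (-1/3)) powr (\<mu> - \<nu>) / 10 powr (\<mu> - \<nu>)"
      unfolding R_def using t0 by (simp add: powr_divide)
    also have "(\<tau> powr (-1/3)) powr (\<mu> - \<nu>) = \<tau> powr ((\<nu> - \<mu>) / 3)"
    proof -
      have "-1/3 * (\<mu> - \<nu>) = (\<nu> - \<mu>) / 3" by (simp add: field_simps)
      then show ?thesis by (simp only: powr_powr)
    qed
    also have "\<tau> powr ((\<nu> - \<mu>) / 3) / 10 powr (\<mu> - \<nu>) = \<tau> powr ((\<nu> - \<mu>) / 3) * 10 powr (\<nu> - \<mu>)"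
    proof -
      have "10 powr (\<nu> - \<mu>) = 1 / 10 powr (\<mu> - \<nu>)" using powr_minus_divide[of 10 "\<mu> - \<nu>"] by simp
      then show ?thesis by simp
    qed
    finally have Rq: "R powr (\<mu> - \<nu>) = \<tau> powr ((\<nu> - \<mu>) / 3) * 10 powr (\<nu> - \<mu>)" .
    have "10 powr (\<nu> - \<mu>) \<le> 10 powr (1::real)" using mn by (intro powr_mono) auto
    then have t10: "10 powr (\<nu> - \<mu>) \<le> 10" by simp
    have "2300 * (sqrt M * R powr (\<mu> - \<nu>)) = 2300 * sqrt M * \<tau> powr ((\<nu> - \<mu>) / 3) * 10 powr (\<nu> - \<mu>)"
      unfolding Rq by (simp add: algebra_simps)
    also have "\<dots> \<le> 2300 * sqrt M * \<tau> powr ((\<nu> - \<mu>) / 3) * 10"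
      using t10 M1 by (intro mult_left_mono) auto
    finally show "2300 * (sqrt M * R powr (\<mu> - \<nu>)) \<le> 23000 * sqrt M * \<tau> powr ((\<nu> - \<mu>) / 3)" by simp
  qed
  finally show "(\<integral>\<^sup>+ \<eta>\<in>{\<eta>. (\<xi>, \<eta>) \<in> Dreg \<tau> \<and> \<bar>Psi \<xi> \<eta> - \<alpha>\<bar> < M}.
        ennreal (max \<bar>\<xi>\<bar> \<bar>\<eta>\<bar> * jb \<xi> powr \<mu> / (sqrt \<bar>\<eta>\<bar> * jb (\<xi> - \<eta>) powr \<nu>)) \<partial>lborel)
    \<le> ennreal (23000 * sqrt M * \<tau> powr ((\<nu> - \<mu>) / 3))" .
qed simp


end
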